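(* Let $\mathcal X,\mathcal Y$ be Polish spaces and $P_{XY},Q_{XY}$ Borel probability measures on $\mathcal X\times\mathcal Y$ with $X$-marginals $P_X,Q_X$. Then there exists a coupling $\pi$ of $P_{XY}$ and $Q_{XY}$, i.e. a joint law of $(X,Y,X',Y')$ with $(X,Y)\sim P_{XY}$ and $(X',Y')\sim Q_{XY}$, such that simultaneously $$\pi\{(X,Y)\ne(X',Y')\}=d_{\mathrm{TV}}(P_{XY},Q_{XY})\quad\text{and}\quad\pi\{X\ne X'\}=d_{\mathrm{TV}}(P_X,Q_X).$$
   Context: $d_{\mathrm{TV}}(P,Q)=\sup_E|P(E)-Q(E)|$. *)

theory Defs
  imports "HOL-Probability.Probability"
begin

definition tv_dist :: "'a measure \<Rightarrow> 'a measure \<Rightarrow> real" where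
  "tv_dist P Q = (SUP E\<in>sets P. \<bar>measure P E - measure Q E\<bar>)"

end

theory Submission
  imports Defs
begin

definition msum :: "'a measure \<Rightarrow> 'a measure \<Rightarrow> 'a measure" where
  "msum M N = measure_of (space M) (sets M) (\<lambda>A. emeasure M A + emeasure N A)"

lemma sets_msum[simp, measurable_cong]: "sets (msum M N) = sets M"
  unfolding msum_def by (simp add: sets.space_closed)

lemma space_msum[simp]: "space (msum M N) = space M"
  unfolding msum_def by (simp add: sets.space_closed)

lemma emeasure_msum:
  assumes "sets N = sets M" "A \<in> sets M"
  shows "emeasure (msum M N) A = emeasure M A + emeasure N A"
  unfolding msum_def
proof (rule emeasure_measure_of_sigma)
  show "sigma_algebra (space M) (sets M)" by (rule sets.sigma_algebra_axioms)
  show "positive (sets M) (\<lambda>A. emeasure M A + emeasure N A)"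
    using assms by (auto simp: positive_def)
  show "countably_additive (sets M) (\<lambda>A. emeasure M A + emeasure N A)"
  proof (rule countably_additiveI)
    fix F :: "nat \<Rightarrow> _" assume F: "range F \<subseteq> sets M" "disjoint_family F" "\<Union> (range F) \<in> sets M"
    have "(\<Sum>i. emeasure M (F i) + emeasure N (F i)) = (\<Sum>i. emeasure M (F i)) + (\<Sum>i. emeasure N (F i))"
      by (rule suminf_add[symmetric]) auto
    also have "\<dots> = emeasure M (\<Union> (range F)) + emeasure N (\<Union> (range F))"
      using F assms by (simp add: suminf_emeasure)
    finally show "(\<Sum>i. emeasure M (F i) + emeasure N (F i)) = emeasure M (\<Union> (range F)) + emeasure N (\<Union> (range F))" .
  qed
qed (use assms in auto)

lemma finite_measure_msum:
  assumes "finite_measure M" "finite_measure N" "sets N = sets M"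
  shows "finite_measure (msum M N)"
  using assms by (intro finite_measureI) (simp add: emeasure_msum finite_measure.emeasure_finite)

lemma measure_msum:
  assumes "finite_measure M" "finite_measure N" "sets N = sets M" "A \<in> sets M"
  shows "measure (msum M N) A = measure M A + measure N A"
  using assms by (simp add: emeasure_msum finite_measure.emeasure_eq_measure measure_def[of "msum M N"] ennreal_plus[symmetric] measure_nonneg del: ennreal_plus)

lemma distr_msum:
  assumes "sets N = sets M" "f \<in> measurable M L"
  shows "distr (msum M N) L f = msum (distr M L f) (distr N L f)"
proof (rule measure_eqI)
  fix A assume A: "A \<in> sets (distr (msum M N) L f)"
  then have A': "A \<in> sets L" by simp
  have f': "f \<in> measurable N L" by (subst measurable_cong_sets[OF assms(1) refl]) (rule assms(2))
  have fm: "f \<in> measurable (msum M N) L" by (subst measurable_cong_sets[OF sets_msum refl]) (rule assms(2))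
  have sp: "space N = space M" using assms(1) by (rule sets_eq_imp_space_eq)
  have pre: "f -` A \<inter> space M \<in> sets M" using assms(2) A' by (rule measurable_sets)
  have "emeasure (distr (msum M N) L f) A = emeasure (msum M N) (f -` A \<inter> space M)"
    using emeasure_distr[OF fm A'] by simp
  also have "\<dots> = emeasure M (f -` A \<inter> space M) + emeasure N (f -` A \<inter> space N)"
    using emeasure_msum[OF assms(1) pre] sp by simp
  also have "\<dots> = emeasure (distr M L f) A + emeasure (distr N L f) A"
    using emeasure_distr[OF assms(2) A'] emeasure_distr[OF f' A'] by simp
  also have "\<dots> = emeasure (msum (distr M L f) (distr N L f)) A"
    by (rule emeasure_msum[symmetric]) (use A' in simp_all)
  finally show "emeasure (distr (msum M N) L f) A = emeasure (msum (distr M L f) (distr N L f)) A" .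
qed simp

lemma tv_dist_msum:
  assumes "finite_measure m" "finite_measure M1" "finite_measure N1"
    "sets M1 = sets m" "sets N1 = sets m"
  shows "tv_dist (msum m M1) (msum m N1) = tv_dist M1 N1"
  unfolding tv_dist_def
proof (rule SUP_cong)
  show "sets (msum m M1) = sets M1" using assms by simp
  fix E assume "E \<in> sets M1"
  then have E: "E \<in> sets m" using assms(4) by simp
  show "\<bar>measure (msum m M1) E - measure (msum m N1) E\<bar> = \<bar>measure M1 E - measure N1 E\<bar>"
    by (simp only: measure_msum[OF assms(1,2,4) E] measure_msum[OF assms(1,3,5) E])
qed

lemma tv_dist_sing:
  assumes "finite_measure M1" "finite_measure N1" "sets N1 = sets M1"
    and G: "G \<in> sets M1" "emeasure M1 (space M1 - G) = 0" "emeasure N1 G = 0"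
    and eq: "measure M1 (space M1) = measure N1 (space N1)"
  shows "tv_dist M1 N1 = measure M1 (space M1)"
proof -
  interpret M1: finite_measure M1 by fact
  interpret N1: finite_measure N1 by fact
  have sp: "space N1 = space M1" using assms(3) by (rule sets_eq_imp_space_eq)
  have bound: "\<bar>measure M1 E - measure N1 E\<bar> \<le> measure M1 (space M1)" if "E \<in> sets M1" for E
  proof -
    have "measure M1 E \<le> measure M1 (space M1)" by (rule M1.bounded_measure)
    moreover have "measure N1 E \<le> measure N1 (space N1)" by (rule N1.bounded_measure)
    ultimately show ?thesis using eq measure_nonneg[of M1 E] measure_nonneg[of N1 E] unfolding abs_le_iff by linarith
  qed
  have G0: "measure M1 (space M1 - G) = 0" using G(2) by (simp add: M1.emeasure_eq_measure)
  have MG: "measure M1 G = measure M1 (space M1)"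
    using G0 M1.finite_measure_compl[OF G(1)] by linarith
  have NG: "measure N1 G = 0" using G(3) by (simp add: N1.emeasure_eq_measure)
  have "tv_dist M1 N1 = (SUP E\<in>sets M1. \<bar>measure M1 E - measure N1 E\<bar>)" by (simp add: tv_dist_def)
  also have "\<dots> = measure M1 (space M1)"
  proof (rule cSup_eq_maximum)
    have "measure M1 (space M1) = \<bar>measure M1 G - measure N1 G\<bar>"
      using MG NG by simp
    then show "measure M1 (space M1) \<in> (\<lambda>E. \<bar>measure M1 E - measure N1 E\<bar>) ` sets M1"
      using G(1) by (rule image_eqI)
  next
    fix x assume "x \<in> (\<lambda>E. \<bar>measure M1 E - measure N1 E\<bar>) ` sets M1"
    then obtain E where "E \<in> sets M1" "x = \<bar>measure M1 E - measure N1 E\<bar>" by blast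
    then show "x \<le> measure M1 (space M1)" using bound by simp
  qed
  finally show ?thesis .
qed

lemma finite_density_le:
  assumes "finite_measure (density \<mu> p)" "f \<in> borel_measurable \<mu>" "p \<in> borel_measurable \<mu>"
    "\<And>x. x \<in> space \<mu> \<Longrightarrow> f x \<le> p x"
  shows "finite_measure (density \<mu> f)"
proof (rule finite_measureI)
  have "emeasure (density \<mu> f) (space (density \<mu> f)) = (\<integral>\<^sup>+x. f x * indicator (space \<mu>) x \<partial>\<mu>)"
    using assms by (simp add: emeasure_density)
  also have "\<dots> \<le> (\<integral>\<^sup>+x. p x * indicator (space \<mu>) x \<partial>\<mu>)"
    using assms(4) by (intro nn_integral_mono) (auto split: split_indicator)
  also have "\<dots> = emeasure (density \<mu> p) (space (density \<mu> p))"
    using assms by (simp add: emeasure_density)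
  also have "\<dots> < \<infinity>" using assms(1) finite_measure.emeasure_finite[OF assms(1)] by (simp add: top.not_eq_extremum)
  finally show "emeasure (density \<mu> f) (space (density \<mu> f)) \<noteq> \<infinity>" by simp
qed

lemma decomp:
  assumes fM: "finite_measure M" and fN: "finite_measure N" and sN: "sets N = sets M"
  shows "\<exists>mm M1 N1 G. finite_measure mm \<and> finite_measure M1 \<and> finite_measure N1 \<and>
     sets mm = sets M \<and> sets M1 = sets M \<and> sets N1 = sets M \<and>
     M = msum mm M1 \<and> N = msum mm N1 \<and> G \<in> sets M \<and>
     emeasure M1 (space M - G) = 0 \<and> emeasure N1 G = 0"
proof -
  define \<mu> where "\<mu> = msum M N"
  have s\<mu>[simp]: "sets \<mu> = sets M" "space \<mu> = space M" unfolding \<mu>_def by simp_all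
  have spN: "space N = space M" using sN by (rule sets_eq_imp_space_eq)
  interpret \<mu>: finite_measure \<mu> unfolding \<mu>_def by (rule finite_measure_msum[OF fM fN sN])
  have acM: "absolutely_continuous \<mu> M"
    unfolding absolutely_continuous_def
  proof
    fix A assume A0: "A \<in> null_sets \<mu>"
    then have A1: "A \<in> sets M" "emeasure \<mu> A = 0" by auto
    then have A: "A \<in> sets M" "emeasure M A + emeasure N A = 0"
      unfolding \<mu>_def using emeasure_msum[OF sN A1(1)] by auto
    then show "A \<in> null_sets M" by auto
  qed
  have acN: "absolutely_continuous \<mu> N"
    unfolding absolutely_continuous_def
  proof
    fix A assume A0: "A \<in> null_sets \<mu>"
    then have A1: "A \<in> sets M" "emeasure \<mu> A = 0" by auto
    then have A: "A \<in> sets M" "emeasure M A + emeasure N A = 0"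
      unfolding \<mu>_def using emeasure_msum[OF sN A1(1)] by auto
    then show "A \<in> null_sets N" using sN by auto
  qed
  define p where "p = RN_deriv \<mu> M"
  define q where "q = RN_deriv \<mu> N"
  have pM: "density \<mu> p = M" unfolding p_def by (rule \<mu>.density_RN_deriv[OF acM]) simp
  have qN: "density \<mu> q = N" unfolding q_def by (rule \<mu>.density_RN_deriv[OF acN]) (simp add: sN)
  have pm[measurable]: "p \<in> borel_measurable \<mu>" unfolding p_def by simp
  have qm[measurable]: "q \<in> borel_measurable \<mu>" unfolding q_def by simp
  have pm'[measurable]: "p \<in> borel_measurable M" using pm by (simp add: measurable_cong_sets[OF s\<mu>(1)[symmetric] refl])
  have qm'[measurable]: "q \<in> borel_measurable M" using qm by (simp add: measurable_cong_sets[OF s\<mu>(1)[symmetric] refl])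
  have pfin: "AE x in \<mu>. p x \<noteq> \<infinity>" unfolding p_def
    by (rule \<mu>.RN_deriv_finite[OF finite_measure.sigma_finite_measure[OF fM] acM]) simp
  have qfin: "AE x in \<mu>. q x \<noteq> \<infinity>" unfolding q_def
    by (rule \<mu>.RN_deriv_finite[OF finite_measure.sigma_finite_measure[OF fN] acN]) (simp add: sN)
  define mm where "mm = density \<mu> (\<lambda>x. min (p x) (q x))"
  define M1 where "M1 = density \<mu> (\<lambda>x. p x - min (p x) (q x))"
  define N1 where "N1 = density \<mu> (\<lambda>x. q x - min (p x) (q x))"
  define G where "G = {x\<in>space M. q x < p x}"
  have smm: "sets mm = sets M" "sets M1 = sets M" "sets N1 = sets M"
    unfolding mm_def M1_def N1_def by simp_all
  have fmm: "finite_measure mm" unfolding mm_def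
    by (rule finite_density_le[of _ p]) (use fM pM in auto)
  have fM1: "finite_measure M1" unfolding M1_def
    by (rule finite_density_le[of _ p]) (use fM pM in auto)
  have fN1: "finite_measure N1" unfolding N1_def
    by (rule finite_density_le[of _ q]) (use fN qN in auto)
  have G: "G \<in> sets M" unfolding G_def by measurable
  have eqM: "M = msum mm M1"
  proof (rule measure_eqI)
    fix A assume "A \<in> sets M"
    then have A[measurable]: "A \<in> sets \<mu>" by simp
    have "emeasure (msum mm M1) A = emeasure mm A + emeasure M1 A"
      using A smm by (simp add: emeasure_msum)
    also have "\<dots> = (\<integral>\<^sup>+x. min (p x) (q x) * indicator A x \<partial>\<mu>) + (\<integral>\<^sup>+x. (p x - min (p x) (q x)) * indicator A x \<partial>\<mu>)"
      using A unfolding mm_def M1_def by (simp add: emeasure_density)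
    also have "\<dots> = (\<integral>\<^sup>+x. min (p x) (q x) * indicator A x + (p x - min (p x) (q x)) * indicator A x \<partial>\<mu>)"
      using A by (intro nn_integral_add[symmetric]) measurable
    also have "\<dots> = (\<integral>\<^sup>+x. p x * indicator A x \<partial>\<mu>)"
      by (intro nn_integral_cong) (simp add: distrib_right[symmetric] add_diff_inverse_ennreal)
    also have "\<dots> = emeasure M A" using A pM emeasure_density[OF pm A] by simp
    finally show "emeasure M A = emeasure (msum mm M1) A" by simp
  qed (use smm in simp)
  have eqN: "N = msum mm N1"
  proof (rule measure_eqI)
    fix A assume "A \<in> sets N"
    then have A[measurable]: "A \<in> sets \<mu>" using sN by simp
    have "emeasure (msum mm N1) A = emeasure mm A + emeasure N1 A"
      using A smm by (simp add: emeasure_msum)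
    also have "\<dots> = (\<integral>\<^sup>+x. min (p x) (q x) * indicator A x \<partial>\<mu>) + (\<integral>\<^sup>+x. (q x - min (p x) (q x)) * indicator A x \<partial>\<mu>)"
      using A unfolding mm_def N1_def by (simp add: emeasure_density)
    also have "\<dots> = (\<integral>\<^sup>+x. min (p x) (q x) * indicator A x + (q x - min (p x) (q x)) * indicator A x \<partial>\<mu>)"
      using A by (intro nn_integral_add[symmetric]) measurable
    also have "\<dots> = (\<integral>\<^sup>+x. q x * indicator A x \<partial>\<mu>)"
      by (intro nn_integral_cong) (simp add: distrib_right[symmetric] add_diff_inverse_ennreal)
    also have "\<dots> = emeasure N A" using A qN emeasure_density[OF qm A] by simp
    finally show "emeasure N A = emeasure (msum mm N1) A" by simp
  qed (use smm sN in simp)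
  have M1G: "emeasure M1 (space M - G) = 0"
  proof -
    have "emeasure M1 (space M - G) = (\<integral>\<^sup>+x. (p x - min (p x) (q x)) * indicator (space M - G) x \<partial>\<mu>)"
      unfolding M1_def using G by (simp add: emeasure_density sets.Diff)
    also have "\<dots> = (\<integral>\<^sup>+x. 0 \<partial>\<mu>)"
      using pfin by (intro nn_integral_cong_AE) (auto simp: G_def split: split_indicator)
    finally show ?thesis by simp
  qed
  have N1G: "emeasure N1 G = 0"
  proof -
    have "emeasure N1 G = (\<integral>\<^sup>+x. (q x - min (p x) (q x)) * indicator G x \<partial>\<mu>)"
      unfolding N1_def using G by (simp add: emeasure_density)
    also have "\<dots> = (\<integral>\<^sup>+x. 0 \<partial>\<mu>)"
      using qfin by (intro nn_integral_cong_AE) (auto simp: G_def split: split_indicator)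
    finally show ?thesis by simp
  qed
  show ?thesis using fmm fM1 fN1 smm eqM eqN G M1G N1G by blast
qed

lemma borel_meas_cont:
  "continuous_on UNIV f \<Longrightarrow> sets M = sets borel \<Longrightarrow> f \<in> measurable M borel"
  by (subst measurable_cong_sets[of M borel borel borel]) (auto intro: borel_measurable_continuous_onI)

lemma times_borel:
  "A \<in> sets borel \<Longrightarrow> B \<in> sets borel \<Longrightarrow>
   A \<times> B \<in> sets (borel :: ('a::second_countable_topology \<times> 'b::second_countable_topology) measure)"
  by (metis borel_prod pair_measureI)

lemma sets_Ne: "{z::'a::t2_space \<times> 'a. fst z \<noteq> snd z} \<in> sets borel"
  by (intro borel_open open_Collect_neq continuous_intros)

lemma maxcoupling:
  fixes M N :: "'a::polish_space measure"
  assumes fM: "finite_measure M" and fN: "finite_measure N"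
    and sM: "sets M = sets borel" and sN: "sets N = sets borel"
    and eq: "emeasure M (space M) = emeasure N (space N)"
  shows "\<exists>\<kappa>::('a\<times>'a) measure. finite_measure \<kappa> \<and> sets \<kappa> = sets borel \<and>
     distr \<kappa> borel fst = M \<and> distr \<kappa> borel snd = N \<and>
     measure \<kappa> {z. fst z \<noteq> snd z} = tv_dist M N"
proof -
  have sNM: "sets N = sets M" using sM sN by simp
  obtain mm M1 N1 G where fmm: "finite_measure mm" and fM1: "finite_measure M1" and fN1: "finite_measure N1"
    and smm: "sets mm = sets M" and sM1: "sets M1 = sets M" and sN1: "sets N1 = sets M"
    and eqM: "M = msum mm M1" and eqN: "N = msum mm N1" and G: "G \<in> sets M"
    and M1G: "emeasure M1 (space M - G) = 0" and N1G: "emeasure N1 G = 0"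
    using decomp[OF fM fN sNM] by blast
  interpret mm: finite_measure mm by fact
  interpret M1: finite_measure M1 by fact
  interpret N1: finite_measure N1 by fact
  have spM: "space M = UNIV" using sM by (metis sets_eq_imp_space_eq space_borel)
  have smm': "sets mm = sets borel" and sM1': "sets M1 = sets borel" and sN1': "sets N1 = sets borel"
    using smm sM1 sN1 sM by simp_all
  have spmm: "space mm = UNIV" and spM1: "space M1 = UNIV" and spN1: "space N1 = UNIV"
    using smm' sM1' sN1' by (metis sets_eq_imp_space_eq space_borel)+
  have GB: "G \<in> sets borel" using G sM by simp
  define kr where "kr = measure M1 UNIV"
  have kr0: "kr \<ge> 0" unfolding kr_def by simp
  have eM1: "emeasure M1 UNIV = ennreal kr" unfolding kr_def using M1.emeasure_eq_measure by simp
  have "emeasure M UNIV = emeasure mm UNIV + emeasure M1 UNIV"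
    using eqM emeasure_msum[of M1 mm UNIV] sM1 smm spmm by (metis sets.top)
  moreover have "emeasure N UNIV = emeasure mm UNIV + emeasure N1 UNIV"
    using eqN emeasure_msum[of N1 mm UNIV] sN1 smm spmm by (metis sets.top)
  moreover have "emeasure M UNIV = emeasure N UNIV" using eq spM sNM
    by (metis sets_eq_imp_space_eq)
  ultimately have "emeasure mm UNIV + emeasure M1 UNIV = emeasure mm UNIV + emeasure N1 UNIV" by simp
  then have "emeasure M1 UNIV = emeasure N1 UNIV"
    using mm.emeasure_finite[of UNIV] by (simp add: ennreal_add_left_cancel)
  then have eN1: "emeasure N1 UNIV = ennreal kr" using eM1 by simp
  define c where "c = ennreal (if kr = 0 then 0 else 1 / kr)"
  have ck: "c * ennreal kr = (if kr = 0 then 0 else 1)"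
    unfolding c_def using kr0 by (auto simp: ennreal_mult'[symmetric])
  define P12 where "P12 = M1 \<Otimes>\<^sub>M N1"
  have sP12: "sets P12 = sets (borel :: ('a \<times> 'a) measure)"
    unfolding P12_def sets_pair_measure_cong[OF sM1' sN1'] borel_prod ..
  have P12_times: "emeasure P12 (A \<times> B) = emeasure M1 A * emeasure N1 B"
    if "A \<in> sets borel" "B \<in> sets borel" for A B
    unfolding P12_def using that sM1' sN1'
    by (intro N1.emeasure_pair_measure_Times) simp_all
  define D where "D = density P12 (\<lambda>_. c)"
  have sD: "sets D = sets (borel :: ('a \<times> 'a) measure)" unfolding D_def using sP12 by simp
  have eD: "emeasure D A = c * emeasure P12 A" if "A \<in> sets borel" for A
    unfolding D_def using that sP12 by (simp add: emeasure_density_const)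
  have P12UNIV: "emeasure P12 UNIV = ennreal kr * ennreal kr"
    using P12_times[of UNIV UNIV] eM1 eN1 by simp
  have fD: "finite_measure D"
  proof (rule finite_measureI)
    have sp: "space D = UNIV" using sD by (metis sets_eq_imp_space_eq space_borel)
    show "emeasure D (space D) \<noteq> \<infinity>" unfolding sp using eD[of UNIV] P12UNIV
      by (simp add: ennreal_mult_eq_top_iff c_def)
  qed
  define \<Delta> where "\<Delta> = distr mm borel (\<lambda>x. (x, x))"
  have diag_meas: "(\<lambda>x::'a. (x, x)) \<in> measurable mm borel"
    by (rule borel_meas_cont) (auto intro!: continuous_intros simp: smm')
  have s\<Delta>: "sets \<Delta> = sets (borel :: ('a \<times> 'a) measure)" unfolding \<Delta>_def by simp
  have f\<Delta>: "finite_measure \<Delta>" unfolding \<Delta>_def by (rule mm.finite_measure_distr[OF diag_meas])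
  define \<kappa> where "\<kappa> = msum \<Delta> D"
  have s\<kappa>: "sets \<kappa> = sets borel" unfolding \<kappa>_def using s\<Delta> by simp
  have f\<kappa>: "finite_measure \<kappa>" unfolding \<kappa>_def using f\<Delta> fD sD s\<Delta> by (intro finite_measure_msum) auto
  have fst_m: "fst \<in> measurable \<Delta> borel" "snd \<in> measurable \<Delta> borel"
    by (auto intro!: borel_meas_cont continuous_intros simp: s\<Delta>)
  have d\<Delta>1: "distr \<Delta> borel fst = mm" unfolding \<Delta>_def
    using diag_meas by (subst distr_distr) (auto simp: comp_def smm' intro!: distr_id2 borel_meas_cont continuous_intros)
  have d\<Delta>2: "distr \<Delta> borel snd = mm" unfolding \<Delta>_def
    using diag_meas by (subst distr_distr) (auto simp: comp_def smm' intro!: distr_id2 borel_meas_cont continuous_intros)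
  have dD1: "distr D borel fst = M1"
  proof (rule measure_eqI)
    fix A :: "'a set" assume A: "A \<in> sets (distr D borel fst)"
    then have A': "A \<in> sets borel" by simp
    have fm: "fst \<in> measurable D borel" by (auto intro!: borel_meas_cont continuous_intros simp: sD)
    have "emeasure (distr D borel fst) A = emeasure D (A \<times> UNIV)"
      using emeasure_distr[OF fm A'] sD by (simp add: vimage_fst sets_eq_imp_space_eq)
    also have "\<dots> = c * (emeasure M1 A * ennreal kr)"
      using eD[of "A \<times> UNIV"] P12_times[of A UNIV] A' eN1 times_borel[OF A', of UNIV] by simp
    also have "\<dots> = emeasure M1 A"
    proof (cases "kr = 0")
      case True
      then have "emeasure M1 A = 0" using emeasure_mono[of A UNIV M1] eM1 A' sM1' by simp
      then show ?thesis by simp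
    next
      case False
      then show ?thesis using ck by (metis mult.assoc mult.commute mult_1)
    qed
    finally show "emeasure (distr D borel fst) A = emeasure M1 A" .
  qed (simp add: sM1')
  have dD2: "distr D borel snd = N1"
  proof (rule measure_eqI)
    fix A :: "'a set" assume A: "A \<in> sets (distr D borel snd)"
    then have A': "A \<in> sets borel" by simp
    have fm: "snd \<in> measurable D borel" by (auto intro!: borel_meas_cont continuous_intros simp: sD)
    have "emeasure (distr D borel snd) A = emeasure D (UNIV \<times> A)"
      using emeasure_distr[OF fm A'] sD by (simp add: vimage_snd sets_eq_imp_space_eq)
    also have "\<dots> = c * (ennreal kr * emeasure N1 A)"
      using eD[of "UNIV \<times> A"] P12_times[of UNIV A] A' eM1 times_borel[OF _ A', of UNIV] by simp
    also have "\<dots> = emeasure N1 A"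
    proof (cases "kr = 0")
      case True
      then have "emeasure N1 A = 0" using emeasure_mono[of A UNIV N1] eN1 A' sN1' by simp
      then show ?thesis by simp
    next
      case False
      then show ?thesis using ck by (metis mult.assoc mult_1)
    qed
    finally show "emeasure (distr D borel snd) A = emeasure N1 A" .
  qed (simp add: sN1')
  have d1: "distr \<kappa> borel fst = M"
    unfolding \<kappa>_def using sD s\<Delta> fst_m by (subst distr_msum) (auto simp: d\<Delta>1 dD1 eqM)
  have d2: "distr \<kappa> borel snd = N"
    unfolding \<kappa>_def using sD s\<Delta> fst_m by (subst distr_msum) (auto simp: d\<Delta>2 dD2 eqN)
  define Ne where "Ne = {z::'a\<times>'a. fst z \<noteq> snd z}"
  have NeB: "Ne \<in> sets borel" unfolding Ne_def by (rule sets_Ne)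
  have e\<Delta>: "emeasure \<Delta> Ne = 0"
    unfolding \<Delta>_def using NeB diag_meas by (simp add: emeasure_distr Ne_def)
  define Eq where "Eq = {z::'a\<times>'a. fst z = snd z}"
  have EqNe: "Eq = UNIV - Ne" by (auto simp: Eq_def Ne_def)
  have EqB: "Eq \<in> sets borel" unfolding EqNe using sets.Diff[OF sets.top NeB] by simp
  have GcB: "UNIV - G \<in> sets borel" using sets.Diff[OF sets.top GB] by simp
  have R1: "(UNIV - G) \<times> UNIV \<in> sets P12" using times_borel[OF GcB, of UNIV] sP12 by simp
  have R2: "UNIV \<times> G \<in> sets P12" using times_borel[OF _ GB, of UNIV] sP12 by simp
  have "emeasure P12 Eq \<le> emeasure P12 ((UNIV - G) \<times> UNIV \<union> UNIV \<times> G)"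
    by (rule emeasure_mono) (use R1 R2 in \<open>auto simp: Eq_def\<close>)
  also have "\<dots> \<le> emeasure P12 ((UNIV - G) \<times> UNIV) + emeasure P12 (UNIV \<times> G)"
    by (rule emeasure_subadditive[OF R1 R2])
  also have "\<dots> = 0"
    using P12_times[of "UNIV - G" UNIV] P12_times[of UNIV G] GB M1G N1G spM by auto
  finally have P12Eq: "emeasure P12 Eq = 0" by simp
  have "emeasure P12 UNIV = emeasure P12 Ne + emeasure P12 Eq"
  proof -
    have "Ne \<union> Eq = UNIV" "Ne \<inter> Eq = {}" by (auto simp: Ne_def Eq_def)
    moreover have "Ne \<in> sets P12" "Eq \<in> sets P12" using NeB EqB sP12 by simp_all
    ultimately show ?thesis using plus_emeasure[of Ne P12 Eq] by simp
  qed
  then have P12Ne: "emeasure P12 Ne = ennreal kr * ennreal kr" using P12Eq P12UNIV by simp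
  have "emeasure D Ne = ennreal kr"
    using eD[OF NeB] P12Ne ck by (cases "kr = 0") (auto simp: mult.assoc[symmetric])
  then have mD: "measure D Ne = kr" using kr0 by (simp add: measure_def)
  have m\<Delta>: "measure \<Delta> Ne = 0" using e\<Delta> by (simp add: measure_def)
  have m\<kappa>: "measure \<kappa> Ne = kr"
    unfolding \<kappa>_def using measure_msum[OF f\<Delta> fD _, of Ne] sD s\<Delta> NeB m\<Delta> mD by simp
  have "tv_dist M N = tv_dist M1 N1"
    unfolding eqM eqN using fmm fM1 fN1 sM1 sN1 smm by (intro tv_dist_msum) auto
  also have "\<dots> = measure M1 (space M1)"
  proof (rule tv_dist_sing[OF fM1 fN1 _ _ _ N1G])
    show "sets N1 = sets M1" using sM1 sN1 by simp
    show "G \<in> sets M1" using G sM1 by simp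
    show "emeasure M1 (space M1 - G) = 0" using M1G spM spM1 by simp
    show "measure M1 (space M1) = measure N1 (space N1)"
      using eM1 eN1 spM1 spN1 by (simp add: measure_def)
  qed
  also have "\<dots> = kr" unfolding kr_def spM1 ..
  finally have "tv_dist M N = kr" .
  then show ?thesis using f\<kappa> s\<kappa> d1 d2 m\<kappa> unfolding Ne_def by blast
qed

lemma space_borel_sets': "sets M = sets (borel::'a::topological_space measure) \<Longrightarrow> space M = UNIV"
  by (metis sets_eq_imp_space_eq space_borel)

definition cd :: "('a::topological_space \<times> 'b::topological_space) measure \<Rightarrow> 'b set \<Rightarrow> 'a \<Rightarrow> ennreal" where
  "cd A T = RN_deriv (distr A borel fst) (distr (density A (\<lambda>w. indicator T (snd w))) borel fst)"

lemma ae_eq_by_int: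
  assumes fin: "finite_measure \<nu>" and h1: "h1 \<in> borel_measurable \<nu>" and h2: "h2 \<in> borel_measurable \<nu>"
    and eq: "\<And>S. S \<in> sets \<nu> \<Longrightarrow> (\<integral>\<^sup>+x. h1 x * indicator S x \<partial>\<nu>) = (\<integral>\<^sup>+x. h2 x * indicator S x \<partial>\<nu>)"
    and f: "(\<integral>\<^sup>+x. h1 x \<partial>\<nu>) \<noteq> \<infinity>"
  shows "AE x in \<nu>. h1 x = h2 x"
proof -
  have "density \<nu> h1 = density \<nu> h2"
    by (rule measure_eqI) (simp_all add: emeasure_density h1 h2 eq)
  then show ?thesis using finite_density_unique[OF h1 h2 _ _ f] by simp
qed

context
  fixes A :: "('a::second_countable_topology \<times> 'b::second_countable_topology) measure"
  assumes fA: "finite_measure A" and sA: "sets A = sets borel"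
begin

lemma cd_meas: "cd A T \<in> borel_measurable (distr A borel fst)"
  unfolding cd_def by (rule borel_measurable_RN_deriv)

lemma cd_meas': "cd A T \<in> borel_measurable borel"
  using cd_meas by (simp add: measurable_cong_sets[of "distr A borel fst" borel borel borel])

lemma fst_meas_A: "fst \<in> measurable A borel"
  using sA by (intro borel_meas_cont continuous_intros)

lemma snd_meas_A: "snd \<in> measurable A borel"
  using sA by (intro borel_meas_cont continuous_intros)

lemma cd_int:
  assumes T: "T \<in> sets borel" and S: "S \<in> sets borel"
  shows "(\<integral>\<^sup>+x. cd A T x * indicator S x \<partial>distr A borel fst) = emeasure A (S \<times> T)"
proof -
  interpret A: finite_measure A by (rule fA)
  define \<nu> where "\<nu> = distr A borel (fst :: 'a \<times> 'b \<Rightarrow> 'a)"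
  define AT where "AT = distr (density A (\<lambda>w. indicator T (snd w))) borel (fst :: 'a \<times> 'b \<Rightarrow> 'a)"
  have spA: "space A = UNIV" using sA by (rule space_borel_sets')
  interpret \<nu>: finite_measure \<nu> unfolding \<nu>_def by (rule A.finite_measure_distr[OF fst_meas_A])
  have indm: "(\<lambda>w. indicator T (snd w) :: ennreal) \<in> borel_measurable A"
    using T snd_meas_A by measurable
  have fstd: "fst \<in> measurable (density A (\<lambda>w. indicator T (snd w))) borel"
    using fst_meas_A by simp
  have eAT: "emeasure AT R = emeasure A (R \<times> T)" if R: "R \<in> sets borel" for R
  proof -
    have RT: "R \<times> T \<in> sets A" using times_borel[OF R T] sA by simp
    have "emeasure AT R = emeasure (density A (\<lambda>w. indicator T (snd w))) (fst -` R \<inter> space A)"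
      unfolding AT_def using emeasure_distr[OF fstd R] by simp
    also have "\<dots> = (\<integral>\<^sup>+w. indicator T (snd w) * indicator (fst -` R \<inter> space A) w \<partial>A)"
      using measurable_sets[OF fst_meas_A R] by (simp add: emeasure_density[OF indm])
    also have "\<dots> = (\<integral>\<^sup>+w. indicator (R \<times> T) w \<partial>A)"
      by (intro nn_integral_cong) (auto simp: spA split: split_indicator)
    also have "\<dots> = emeasure A (R \<times> T)" using RT by simp
    finally show ?thesis .
  qed
  have e\<nu>: "emeasure \<nu> R = emeasure A (R \<times> UNIV)" if R: "R \<in> sets borel" for R
    unfolding \<nu>_def using emeasure_distr[OF fst_meas_A R] spA by (simp add: vimage_fst)
  have ac: "absolutely_continuous \<nu> AT"
    unfolding absolutely_continuous_def
  proof
    fix R assume "R \<in> null_sets \<nu>"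
    then have R: "R \<in> sets borel" "emeasure \<nu> R = 0" unfolding \<nu>_def by auto
    have "emeasure A (R \<times> T) \<le> emeasure A (R \<times> UNIV)"
      using times_borel[OF R(1), of UNIV] sA by (intro emeasure_mono) auto
    then have "emeasure AT R = 0" using eAT[OF R(1)] e\<nu>[OF R(1)] R(2) by simp
    then show "R \<in> null_sets AT" using R(1) unfolding AT_def by auto
  qed
  have dens: "density \<nu> (cd A T) = AT"
    unfolding cd_def \<nu>_def[symmetric] AT_def[symmetric]
    by (rule \<nu>.density_RN_deriv[OF ac]) (simp add: AT_def \<nu>_def)
  have "(\<integral>\<^sup>+x. cd A T x * indicator S x \<partial>\<nu>) = emeasure (density \<nu> (cd A T)) S"
    using S cd_meas by (simp add: emeasure_density \<nu>_def)
  also have "\<dots> = emeasure A (S \<times> T)" using dens eAT[OF S] by simp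
  finally show ?thesis unfolding \<nu>_def .
qed

lemma cd_ae_eq:
  assumes h: "h \<in> borel_measurable borel"
    and eq: "\<And>S. S \<in> sets borel \<Longrightarrow> (\<integral>\<^sup>+x. h x * indicator S x \<partial>distr A borel fst) = emeasure A (S \<times> T)"
    and T: "T \<in> sets borel"
  shows "AE x in distr A borel fst. cd A T x = h x"
proof (rule ae_eq_by_int)
  interpret A: finite_measure A by (rule fA)
  show "finite_measure (distr A borel (fst :: 'a \<times> 'b \<Rightarrow> 'a))" by (rule A.finite_measure_distr[OF fst_meas_A])
  show "cd A T \<in> borel_measurable (distr A borel fst)" by (rule cd_meas)
  show "h \<in> borel_measurable (distr A borel fst)" using h by simp
  fix S :: "'a set" assume "S \<in> sets (distr A borel fst)"
  then have S: "S \<in> sets borel" by simp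
  show "(\<integral>\<^sup>+x. cd A T x * indicator S x \<partial>distr A borel fst) = (\<integral>\<^sup>+x. h x * indicator S x \<partial>distr A borel fst)"
    using cd_int[OF T S] eq[OF S] by simp
next
  interpret A: finite_measure A by (rule fA)
  have "(\<integral>\<^sup>+x. cd A T x \<partial>distr A borel fst) = (\<integral>\<^sup>+x. cd A T x * indicator UNIV x \<partial>distr A borel fst)"
    by simp
  also have "\<dots> = emeasure A (UNIV \<times> T)" using cd_int[OF T sets.top[of borel]] by simp
  finally show "(\<integral>\<^sup>+x. cd A T x \<partial>distr A borel fst) \<noteq> \<infinity>" using A.emeasure_finite by simp
qed

lemma cd_add:
  assumes J: "finite J" and T: "\<And>j. j \<in> J \<Longrightarrow> T j \<in> sets borel" and dis: "disjoint_family_on T J"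
  shows "AE x in distr A borel fst. cd A (\<Union>j\<in>J. T j) x = (\<Sum>j\<in>J. cd A (T j) x)"
proof (rule cd_ae_eq)
  show "(\<lambda>x. \<Sum>j\<in>J. cd A (T j) x) \<in> borel_measurable borel"
    using cd_meas' by (intro borel_measurable_sum) auto
  show "(\<Union>j\<in>J. T j) \<in> sets borel" using T J by auto
  fix S :: "'a set" assume S: "S \<in> sets borel"
  have "(\<integral>\<^sup>+x. (\<Sum>j\<in>J. cd A (T j) x) * indicator S x \<partial>distr A borel fst)
      = (\<integral>\<^sup>+x. (\<Sum>j\<in>J. cd A (T j) x * indicator S x) \<partial>distr A borel fst)"
    by (simp add: sum_distrib_right)
  also have "\<dots> = (\<Sum>j\<in>J. \<integral>\<^sup>+x. cd A (T j) x * indicator S x \<partial>distr A borel fst)"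
    using S cd_meas' by (intro nn_integral_sum) auto
  also have "\<dots> = (\<Sum>j\<in>J. emeasure A (S \<times> T j))"
    using cd_int[OF T S] by simp
  also have "\<dots> = emeasure A (\<Union>j\<in>J. S \<times> T j)"
    using J T S sA times_borel dis by (intro sum_emeasure) (auto simp: disjoint_family_on_def, blast)
  also have "(\<Union>j\<in>J. S \<times> T j) = S \<times> (\<Union>j\<in>J. T j)" by auto
  finally show "(\<integral>\<^sup>+x. (\<Sum>j\<in>J. cd A (T j) x) * indicator S x \<partial>distr A borel fst) = emeasure A (S \<times> (\<Union>j\<in>J. T j))" .
qed

lemma cd_UNIV: "AE x in distr A borel fst. cd A UNIV x = 1"
proof (rule cd_ae_eq)
  fix S :: "'a set" assume S: "S \<in> sets borel"
  interpret A: finite_measure A by (rule fA)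
  have spA: "space A = UNIV" using sA by (rule space_borel_sets')
  show "(\<integral>\<^sup>+x. 1 * indicator S x \<partial>distr A borel fst) = emeasure A (S \<times> UNIV)"
    using S emeasure_distr[OF fst_meas_A S] spA by (simp add: vimage_fst)
qed auto

lemma cd_le1: assumes T: "T \<in> sets borel" shows "AE x in distr A borel fst. cd A T x \<le> 1"
proof -
  have "AE x in distr A borel fst. cd A (\<Union>j\<in>{True, False}. (if j then T else UNIV - T)) x
      = (\<Sum>j\<in>{True, False}. cd A (if j then T else UNIV - T) x)"
    using T by (intro cd_add) (auto simp: disjoint_family_on_def)
  moreover have "(\<Union>j\<in>{True, False}. (if j then T else UNIV - T)) = UNIV" by auto
  ultimately have "AE x in distr A borel fst. cd A UNIV x = cd A T x + cd A (UNIV - T) x" by simp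
  then show ?thesis using cd_UNIV by eventually_elim (metis le_iff_add)
qed

end

lemma atoms_sets:
  assumes fin: "finite \<T>" and meas: "\<And>\<tau>. \<tau> \<in> \<T> \<Longrightarrow> \<tau> \<in> sets (borel :: 'b::topological_space measure)"
  shows "{y::'b. \<forall>\<tau>\<in>\<T>. (y \<in> \<tau>) = (\<tau> \<in> K)} \<in> sets borel"
proof (cases "\<T> = {}")
  case True
  then show ?thesis by simp
next
  case False
  have e: "{y::'b. \<forall>\<tau>\<in>\<T>. (y \<in> \<tau>) = (\<tau> \<in> K)} = (\<Inter>\<tau>\<in>\<T>. (if \<tau> \<in> K then \<tau> else UNIV - \<tau>))"
    by auto
  show ?thesis unfolding e using fin False meas by (intro sets.finite_INT) auto
qed

lemma atoms_union:
  assumes "\<tau> \<in> \<T>"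
  shows "\<tau> = (\<Union>K\<in>{K \<in> Pow \<T>. \<tau> \<in> K}. {y. \<forall>\<tau>'\<in>\<T>. (y \<in> \<tau>') = (\<tau>' \<in> K)})"
proof
  show "\<tau> \<subseteq> (\<Union>K\<in>{K \<in> Pow \<T>. \<tau> \<in> K}. {y. \<forall>\<tau>'\<in>\<T>. (y \<in> \<tau>') = (\<tau>' \<in> K)})"
  proof
    fix y assume "y \<in> \<tau>"
    then show "y \<in> (\<Union>K\<in>{K \<in> Pow \<T>. \<tau> \<in> K}. {y. \<forall>\<tau>'\<in>\<T>. (y \<in> \<tau>') = (\<tau>' \<in> K)})"
      using assms by (intro UN_I[of "{\<tau>'\<in>\<T>. y \<in> \<tau>'}"]) auto
  qed
qed (use assms in auto)

lemma atoms_disjoint: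
  "disjoint_family_on (\<lambda>K. {y. \<forall>\<tau>'\<in>\<T>. (y \<in> \<tau>') = (\<tau>' \<in> K)}) (Pow \<T>)"
  unfolding disjoint_family_on_def by auto

lemma expand_sum:
  fixes a :: "'t set \<Rightarrow> ennreal" and b :: "'u set \<Rightarrow> ennreal"
  assumes I: "finite I" and fT: "finite \<T>" and fU: "finite \<U>"
    and TI: "\<And>i. i \<in> I \<Longrightarrow> T i \<in> \<T>" and UI: "\<And>i. i \<in> I \<Longrightarrow> U i \<in> \<U>"
  shows "(\<Sum>i\<in>I. s i * (\<Sum>K\<in>{K \<in> Pow \<T>. T i \<in> K}. a K) * (\<Sum>L\<in>{L \<in> Pow \<U>. U i \<in> L}. b L))
    = (\<Sum>K\<in>Pow \<T>. \<Sum>L\<in>Pow \<U>. a K * b L * (\<Sum>i\<in>I. s i * (if T i \<in> K then 1 else 0) * (if U i \<in> L then 1 else 0)))"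
proof -
  have fPT: "finite (Pow \<T>)" and fPU: "finite (Pow \<U>)" using fT fU by simp_all
  have "(\<Sum>i\<in>I. s i * (\<Sum>K\<in>{K \<in> Pow \<T>. T i \<in> K}. a K) * (\<Sum>L\<in>{L \<in> Pow \<U>. U i \<in> L}. b L))
      = (\<Sum>i\<in>I. s i * (\<Sum>K\<in>Pow \<T>. if T i \<in> K then a K else 0) * (\<Sum>L\<in>Pow \<U>. if U i \<in> L then b L else 0))"
    by (simp only: sum.inter_filter[OF fPT] sum.inter_filter[OF fPU])
  also have "\<dots> = (\<Sum>i\<in>I. \<Sum>K\<in>Pow \<T>. \<Sum>L\<in>Pow \<U>. a K * b L * (s i * (if T i \<in> K then 1 else 0) * (if U i \<in> L then 1 else 0)))"
  proof (rule sum.cong[OF refl])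
    fix i assume "i \<in> I"
    have "s i * (\<Sum>K\<in>Pow \<T>. if T i \<in> K then a K else 0) * (\<Sum>L\<in>Pow \<U>. if U i \<in> L then b L else 0)
        = (\<Sum>K\<in>Pow \<T>. \<Sum>L\<in>Pow \<U>. s i * (if T i \<in> K then a K else 0) * (if U i \<in> L then b L else 0))"
      by (simp add: sum_distrib_left sum_distrib_right sum_product mult.assoc) (rule sum.swap)
    also have "\<dots> = (\<Sum>K\<in>Pow \<T>. \<Sum>L\<in>Pow \<U>. a K * b L * (s i * (if T i \<in> K then 1 else 0) * (if U i \<in> L then 1 else 0)))"
      by (intro sum.cong refl) (simp add: ac_simps)
    finally show "s i * (\<Sum>K\<in>Pow \<T>. if T i \<in> K then a K else 0) * (\<Sum>L\<in>Pow \<U>. if U i \<in> L then b L else 0)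
        = (\<Sum>K\<in>Pow \<T>. \<Sum>L\<in>Pow \<U>. a K * b L * (s i * (if T i \<in> K then 1 else 0) * (if U i \<in> L then 1 else 0)))" .
  qed
  also have "\<dots> = (\<Sum>K\<in>Pow \<T>. \<Sum>i\<in>I. \<Sum>L\<in>Pow \<U>. a K * b L * (s i * (if T i \<in> K then 1 else 0) * (if U i \<in> L then 1 else 0)))"
    by (rule sum.swap)
  also have "\<dots> = (\<Sum>K\<in>Pow \<T>. \<Sum>L\<in>Pow \<U>. \<Sum>i\<in>I. a K * b L * (s i * (if T i \<in> K then 1 else 0) * (if U i \<in> L then 1 else 0)))"
    by (intro sum.cong refl sum.swap)
  also have "\<dots> = (\<Sum>K\<in>Pow \<T>. \<Sum>L\<in>Pow \<U>. a K * b L * (\<Sum>i\<in>I. s i * (if T i \<in> K then 1 else 0) * (if U i \<in> L then 1 else 0)))"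
    by (simp add: sum_distrib_left)
  finally show ?thesis .
qed

lemma core:
  fixes F :: "'b::topological_space set \<Rightarrow> 'a \<Rightarrow> ennreal" and Gf :: "'c::topological_space set \<Rightarrow> 'a \<Rightarrow> ennreal"
    and \<nu> :: "'a measure"
  assumes Fadd: "\<And>(J :: 'b set set set) T. finite J \<Longrightarrow> (\<And>j. j \<in> J \<Longrightarrow> T j \<in> sets borel) \<Longrightarrow>
      disjoint_family_on T J \<Longrightarrow> AE x in \<nu>. F (\<Union>j\<in>J. T j) x = (\<Sum>j\<in>J. F (T j) x)"
  and Gadd: "\<And>(J :: 'c set set set) U. finite J \<Longrightarrow> (\<And>j. j \<in> J \<Longrightarrow> U j \<in> sets borel) \<Longrightarrow>
      disjoint_family_on U J \<Longrightarrow> AE x in \<nu>. Gf (\<Union>j\<in>J. U j) x = (\<Sum>j\<in>J. Gf (U j) x)"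
  and I: "finite I" and J: "finite J"
  and mI: "\<And>i. i \<in> I \<Longrightarrow> T i \<in> sets borel \<and> U i \<in> sets borel"
  and mJ: "\<And>j. j \<in> J \<Longrightarrow> T' j \<in> sets borel \<and> U' j \<in> sets borel"
  and eq: "\<And>x y z. (\<Sum>i\<in>I. indicator (S i) x * indicator (T i) y * indicator (U i) z)
     = (\<Sum>j\<in>J. indicator (S' j) x * indicator (T' j) y * indicator (U' j) z :: ennreal)"
  shows "AE x in \<nu>. (\<Sum>i\<in>I. indicator (S i) x * F (T i) x * Gf (U i) x)
     = (\<Sum>j\<in>J. indicator (S' j) x * F (T' j) x * Gf (U' j) x)"
proof -
  define \<T> where "\<T> = T ` I \<union> T' ` J"
  define \<U> where "\<U> = U ` I \<union> U' ` J"
  have fT: "finite \<T>" and fU: "finite \<U>" unfolding \<T>_def \<U>_def using I J by auto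
  have mT: "\<tau> \<in> sets borel" if "\<tau> \<in> \<T>" for \<tau> using that mI mJ unfolding \<T>_def by auto
  have mU: "\<tau> \<in> sets borel" if "\<tau> \<in> \<U>" for \<tau> using that mI mJ unfolding \<U>_def by auto
  define atA where "atA K = {y. \<forall>\<tau>\<in>\<T>. (y \<in> \<tau>) = (\<tau> \<in> K)}" for K
  define btB where "btB L = {z. \<forall>\<tau>\<in>\<U>. (z \<in> \<tau>) = (\<tau> \<in> L)}" for L
  have at_m: "atA K \<in> sets borel" for K unfolding atA_def by (rule atoms_sets[OF fT mT])
  have bt_m: "btB L \<in> sets borel" for L unfolding btB_def by (rule atoms_sets[OF fU mU])
  have AEF: "AE x in \<nu>. \<forall>\<tau>\<in>\<T>. F \<tau> x = (\<Sum>K\<in>{K \<in> Pow \<T>. \<tau> \<in> K}. F (atA K) x)"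
  proof (rule AE_finite_allI[OF fT])
    fix \<tau> assume t: "\<tau> \<in> \<T>"
    have "AE x in \<nu>. F (\<Union>K\<in>{K \<in> Pow \<T>. \<tau> \<in> K}. atA K) x = (\<Sum>K\<in>{K \<in> Pow \<T>. \<tau> \<in> K}. F (atA K) x)"
      using fT at_m disjoint_family_on_mono[OF _ atoms_disjoint[of \<T>], of "{K \<in> Pow \<T>. \<tau> \<in> K}"]
      unfolding atA_def[abs_def] by (intro Fadd) auto
    moreover have "(\<Union>K\<in>{K \<in> Pow \<T>. \<tau> \<in> K}. atA K) = \<tau>" unfolding atA_def using atoms_union[OF t] by simp
    ultimately show "AE x in \<nu>. F \<tau> x = (\<Sum>K\<in>{K \<in> Pow \<T>. \<tau> \<in> K}. F (atA K) x)" by simp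
  qed
  have AEG: "AE x in \<nu>. \<forall>\<tau>\<in>\<U>. Gf \<tau> x = (\<Sum>L\<in>{L \<in> Pow \<U>. \<tau> \<in> L}. Gf (btB L) x)"
  proof (rule AE_finite_allI[OF fU])
    fix \<tau> assume t: "\<tau> \<in> \<U>"
    have "AE x in \<nu>. Gf (\<Union>L\<in>{L \<in> Pow \<U>. \<tau> \<in> L}. btB L) x = (\<Sum>L\<in>{L \<in> Pow \<U>. \<tau> \<in> L}. Gf (btB L) x)"
      using fU bt_m disjoint_family_on_mono[OF _ atoms_disjoint[of \<U>], of "{L \<in> Pow \<U>. \<tau> \<in> L}"]
      unfolding btB_def[abs_def] by (intro Gadd) auto
    moreover have "(\<Union>L\<in>{L \<in> Pow \<U>. \<tau> \<in> L}. btB L) = \<tau>" unfolding btB_def using atoms_union[OF t] by simp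
    ultimately show "AE x in \<nu>. Gf \<tau> x = (\<Sum>L\<in>{L \<in> Pow \<U>. \<tau> \<in> L}. Gf (btB L) x)" by simp
  qed
  have F0: "AE x in \<nu>. F {} x = 0"
    using Fadd[of "{}" "\<lambda>_. {}"] by (simp add: disjoint_family_on_def)
  have G0: "AE x in \<nu>. Gf {} x = 0"
    using Gadd[of "{}" "\<lambda>_. {}"] by (simp add: disjoint_family_on_def)
  show ?thesis
    using AEF AEG F0 G0
  proof eventually_elim
    case (elim x)
    define \<Phi> where "\<Phi> K L = (\<Sum>i\<in>I. indicator (S i) x * (if T i \<in> K then 1 else 0) * (if U i \<in> L then 1 else 0 :: ennreal))" for K L
    define \<Phi>' where "\<Phi>' K L = (\<Sum>j\<in>J. indicator (S' j) x * (if T' j \<in> K then 1 else 0) * (if U' j \<in> L then 1 else 0 :: ennreal))" for K L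
    have "(\<Sum>i\<in>I. indicator (S i) x * F (T i) x * Gf (U i) x)
        = (\<Sum>i\<in>I. indicator (S i) x * (\<Sum>K\<in>{K \<in> Pow \<T>. T i \<in> K}. F (atA K) x) * (\<Sum>L\<in>{L \<in> Pow \<U>. U i \<in> L}. Gf (btB L) x))"
      using elim(1,2) by (intro sum.cong refl) (auto simp: \<T>_def \<U>_def)
    also have "\<dots> = (\<Sum>K\<in>Pow \<T>. \<Sum>L\<in>Pow \<U>. F (atA K) x * Gf (btB L) x * \<Phi> K L)"
      unfolding \<Phi>_def by (rule expand_sum[OF I fT fU]) (auto simp: \<T>_def \<U>_def)
    also have "\<dots> = (\<Sum>K\<in>Pow \<T>. \<Sum>L\<in>Pow \<U>. F (atA K) x * Gf (btB L) x * \<Phi>' K L)"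
    proof (intro sum.cong refl)
      fix K L assume K: "K \<in> Pow \<T>" and L: "L \<in> Pow \<U>"
      show "F (atA K) x * Gf (btB L) x * \<Phi> K L = F (atA K) x * Gf (btB L) x * \<Phi>' K L"
      proof (cases "atA K = {} \<or> btB L = {}")
        case True
        then show ?thesis using elim(3,4) by auto
      next
        case False
        then obtain y z where y: "y \<in> atA K" and z: "z \<in> btB L" by blast
        have Ky: "\<And>\<tau>. \<tau> \<in> \<T> \<Longrightarrow> (\<tau> \<in> K) = (y \<in> \<tau>)" using y unfolding atA_def by auto
        have Lz: "\<And>\<tau>. \<tau> \<in> \<U> \<Longrightarrow> (\<tau> \<in> L) = (z \<in> \<tau>)" using z unfolding btB_def by auto
        have "\<Phi> K L = (\<Sum>i\<in>I. indicator (S i) x * indicator (T i) y * indicator (U i) z)"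
          unfolding \<Phi>_def using Ky Lz by (intro sum.cong refl) (auto simp: \<T>_def \<U>_def indicator_def)
        also have "\<dots> = (\<Sum>j\<in>J. indicator (S' j) x * indicator (T' j) y * indicator (U' j) z)" by (rule eq)
        also have "\<dots> = \<Phi>' K L"
          unfolding \<Phi>'_def using Ky Lz by (intro sum.cong refl) (auto simp: \<T>_def \<U>_def indicator_def)
        finally show ?thesis by simp
      qed
    qed
    also have "\<dots> = (\<Sum>j\<in>J. indicator (S' j) x * (\<Sum>K\<in>{K \<in> Pow \<T>. T' j \<in> K}. F (atA K) x) * (\<Sum>L\<in>{L \<in> Pow \<U>. U' j \<in> L}. Gf (btB L) x))"
      unfolding \<Phi>'_def by (rule expand_sum[OF J fT fU, symmetric]) (auto simp: \<T>_def \<U>_def)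
    also have "\<dots> = (\<Sum>j\<in>J. indicator (S' j) x * F (T' j) x * Gf (U' j) x)"
      using elim(1,2) by (intro sum.cong refl) (auto simp: \<T>_def \<U>_def)
    finally show ?case .
  qed
qed

definition Rect :: "('a::topological_space \<times> 'b::topological_space \<times> 'c::topological_space) set set" where
  "Rect = {S \<times> (T \<times> U) | S T U. S \<in> sets borel \<and> T \<in> sets borel \<and> U \<in> sets borel}"

lemma Rect_decomp:
  assumes "R \<in> Rect"
  shows "R = fst ` R \<times> (fst ` snd ` R \<times> snd ` snd ` R)" "fst ` R \<in> sets borel"
    "fst ` snd ` R \<in> sets borel" "snd ` snd ` R \<in> sets borel"
proof -
  obtain S T U where R: "R = S \<times> (T \<times> U)" "S \<in> sets borel" "T \<in> sets borel" "U \<in> sets borel"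
    using assms unfolding Rect_def by blast
  show "R = fst ` R \<times> (fst ` snd ` R \<times> snd ` snd ` R)"
    unfolding R(1) by (auto simp: image_iff)
  show "fst ` R \<in> sets borel"
    using R by (cases "R = {}") (auto simp: fst_image_times snd_image_times)
  show "fst ` snd ` R \<in> sets borel"
    using R by (cases "R = {}") (auto simp: fst_image_times snd_image_times)
  show "snd ` snd ` R \<in> sets borel"
    using R by (cases "R = {}") (auto simp: fst_image_times snd_image_times)
qed

lemma RectI: "S \<in> sets borel \<Longrightarrow> T \<in> sets borel \<Longrightarrow> U \<in> sets borel \<Longrightarrow> S \<times> (T \<times> U) \<in> Rect"
  unfolding Rect_def by blast

lemma semiring_Rect: "semiring_of_sets UNIV (Rect :: ('a::topological_space \<times> 'b::topological_space \<times> 'c::topological_space) set set)"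
proof
  show "Rect \<subseteq> Pow UNIV" by simp
  show "{} \<in> Rect" using RectI[of "{}" UNIV UNIV] by simp
  fix a b :: "('a \<times> 'b \<times> 'c) set" assume a: "a \<in> Rect" and b: "b \<in> Rect"
  obtain S T U where A: "a = S \<times> (T \<times> U)" "S \<in> sets borel" "T \<in> sets borel" "U \<in> sets borel"
    using a unfolding Rect_def by blast
  obtain S' T' U' where B: "b = S' \<times> (T' \<times> U')" "S' \<in> sets borel" "T' \<in> sets borel" "U' \<in> sets borel"
    using b unfolding Rect_def by blast
  have "a \<inter> b = (S \<inter> S') \<times> ((T \<inter> T') \<times> (U \<inter> U'))" unfolding A B by auto
  then show "a \<inter> b \<in> Rect" using A B by (auto intro!: RectI)
  define C where "C = {(S - S') \<times> (T \<times> U), (S \<inter> S') \<times> ((T - T') \<times> U), (S \<inter> S') \<times> ((T \<inter> T') \<times> (U - U'))}"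
  have "C \<subseteq> Rect" unfolding C_def using A B by (auto intro!: RectI)
  moreover have "finite C" unfolding C_def by simp
  moreover have "disjoint C" unfolding C_def disjoint_def disjnt_def by auto
  moreover have "a - b = \<Union>C" unfolding C_def A B by auto
  ultimately show "\<exists>C\<subseteq>Rect. finite C \<and> disjoint C \<and> a - b = \<Union>C" by blast
qed

context
  fixes A :: "('a::polish_space \<times> 'b::polish_space) measure" and B :: "('a \<times> 'c::polish_space) measure"
  assumes fA: "finite_measure A" and fB: "finite_measure B" and sA: "sets A = sets borel" and sB: "sets B = sets borel"
    and marg: "distr A borel fst = distr B borel fst"
begin

definition "nu = distr A borel (fst :: 'a \<times> 'b \<Rightarrow> 'a)"
definition "mu0 S T U = (\<integral>\<^sup>+x. indicator S x * cd A T x * cd B U x \<partial>nu)"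
definition "muR (R :: ('a \<times> 'b \<times> 'c) set) = mu0 (fst ` R) (fst ` snd ` R) (snd ` snd ` R)"

lemma nu_fin: "finite_measure nu"
  unfolding nu_def using fA by (rule finite_measure.finite_measure_distr[OF _ fst_meas_A[OF fA sA]])

lemma nu_sets[simp]: "sets nu = sets borel" unfolding nu_def by simp

lemma nu_space[simp]: "space nu = UNIV" unfolding nu_def by simp

lemma nuB: "nu = distr B borel fst" unfolding nu_def marg ..

lemma cdA_m[measurable]: "cd A T \<in> borel_measurable nu"
  using cd_meas'[OF fA sA] by (simp add: measurable_cong_sets[OF nu_sets refl])

lemma cdB_m[measurable]: "cd B U \<in> borel_measurable nu"
  using cd_meas'[OF fB sB] by (simp add: measurable_cong_sets[OF nu_sets refl])

lemma Fadd: "finite J \<Longrightarrow> (\<And>j. j \<in> J \<Longrightarrow> T j \<in> sets borel) \<Longrightarrow> disjoint_family_on T J \<Longrightarrow>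
    AE x in nu. cd A (\<Union>j\<in>J. T j) x = (\<Sum>j\<in>J. cd A (T j) x)"
  unfolding nu_def by (rule cd_add[OF fA sA])

lemma Gadd: "finite J \<Longrightarrow> (\<And>j. j \<in> J \<Longrightarrow> U j \<in> sets borel) \<Longrightarrow> disjoint_family_on U J \<Longrightarrow>
    AE x in nu. cd B (\<Union>j\<in>J. U j) x = (\<Sum>j\<in>J. cd B (U j) x)"
  unfolding nuB by (rule cd_add[OF fB sB])

lemma F1: "AE x in nu. cd A UNIV x = 1" unfolding nu_def by (rule cd_UNIV[OF fA sA])
lemma G1: "AE x in nu. cd B UNIV x = 1" unfolding nuB by (rule cd_UNIV[OF fB sB])

lemma F0: "AE x in nu. cd A {} x = 0"
  using Fadd[of "{}" "\<lambda>_. {}"] by (simp add: disjoint_family_on_def)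
lemma G0: "AE x in nu. cd B {} x = 0"
  using Gadd[of "{}" "\<lambda>_. {}"] by (simp add: disjoint_family_on_def)

lemma mu0_empty:
  assumes "S = {} \<or> T = {} \<or> U = {}"
  shows "mu0 S T U = 0"
proof -
  have "AE x in nu. indicator S x * cd A T x * cd B U x = 0"
    using F0 G0 by eventually_elim (use assms in auto)
  then have "mu0 S T U = (\<integral>\<^sup>+x. 0 \<partial>nu)" unfolding mu0_def by (rule nn_integral_cong_AE)
  then show ?thesis by simp
qed

lemma muR_eq:
  assumes "S \<in> sets borel" "T \<in> sets borel" "U \<in> sets borel"
  shows "muR (S \<times> (T \<times> U)) = mu0 S T U"
proof (cases "S = {} \<or> T = {} \<or> U = {}")
  case True
  then have "S \<times> (T \<times> U) = {}" by auto
  then show ?thesis using True mu0_empty[of "{}" "{}" "{}"] mu0_empty[OF True] by (simp add: muR_def)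
next
  case False
  then show ?thesis by (simp add: muR_def fst_image_times snd_image_times)
qed

lemma mu0_ST:
  assumes S: "S \<in> sets borel" and T: "T \<in> sets borel"
  shows "mu0 S T UNIV = emeasure A (S \<times> T)"
proof -
  have "mu0 S T UNIV = (\<integral>\<^sup>+x. cd A T x * indicator S x \<partial>nu)"
    unfolding mu0_def using G1 by (intro nn_integral_cong_AE) (auto simp: mult.commute)
  also have "\<dots> = emeasure A (S \<times> T)" unfolding nu_def by (rule cd_int[OF fA sA T S])
  finally show ?thesis .
qed

lemma mu0_SU:
  assumes S: "S \<in> sets borel" and U: "U \<in> sets borel"
  shows "mu0 S UNIV U = emeasure B (S \<times> U)"
proof -
  have "mu0 S UNIV U = (\<integral>\<^sup>+x. cd B U x * indicator S x \<partial>nu)"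
    unfolding mu0_def using F1 by (intro nn_integral_cong_AE) (auto simp: mult.commute)
  also have "\<dots> = emeasure B (S \<times> U)" unfolding nuB by (rule cd_int[OF fB sB U S])
  finally show ?thesis .
qed

lemma mu0_S:
  assumes S: "S \<in> sets borel"
  shows "mu0 S UNIV UNIV = emeasure nu S"
proof -
  have "mu0 S UNIV UNIV = emeasure A (S \<times> UNIV)" by (rule mu0_ST[OF S]) simp
  also have "\<dots> = emeasure nu S"
    unfolding nu_def using emeasure_distr[OF fst_meas_A[OF fA sA] S] space_borel_sets'[OF sA]
    by (simp add: vimage_fst)
  finally show ?thesis .
qed

lemma vol: "volume Rect muR"
proof (rule volumeI)
  show "muR {} = 0" unfolding muR_def by (rule mu0_empty) simp
  show "0 \<le> muR a" for a by simp
  fix C :: "('a \<times> 'b \<times> 'c) set set"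
  assume C: "C \<subseteq> Rect" "disjoint C" "finite C" "\<Union>C \<in> Rect"
  define S where "S c = fst ` c" for c :: "('a \<times> 'b \<times> 'c) set"
  define T where "T c = fst ` snd ` c" for c :: "('a \<times> 'b \<times> 'c) set"
  define U where "U c = snd ` snd ` c" for c :: "('a \<times> 'b \<times> 'c) set"
  have dec: "c = S c \<times> (T c \<times> U c)" if "c \<in> Rect" for c
    unfolding S_def T_def U_def by (rule Rect_decomp(1)[OF that])
  have ind: "indicator c (x, y, z) = indicator (S c) x * indicator (T c) y * (indicator (U c) z :: ennreal)"
    if "c \<in> Rect" for c x y z
    by (subst dec[OF that]) (simp add: indicator_times mult.assoc)
  have AE: "AE x in nu. (\<Sum>c\<in>C. indicator (S c) x * cd A (T c) x * cd B (U c) x)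
      = (\<Sum>c\<in>{\<Union>C}. indicator (S c) x * cd A (T c) x * cd B (U c) x)"
  proof (rule core[where F="cd A" and Gf="cd B"])
    show "\<And>(J :: 'b set set set) Ta. finite J \<Longrightarrow> (\<And>j. j \<in> J \<Longrightarrow> Ta j \<in> sets borel) \<Longrightarrow>
      disjoint_family_on Ta J \<Longrightarrow> AE x in nu. cd A (\<Union>j\<in>J. Ta j) x = (\<Sum>j\<in>J. cd A (Ta j) x)"
      by (rule Fadd)
    show "\<And>(J :: 'c set set set) Ua. finite J \<Longrightarrow> (\<And>j. j \<in> J \<Longrightarrow> Ua j \<in> sets borel) \<Longrightarrow>
      disjoint_family_on Ua J \<Longrightarrow> AE x in nu. cd B (\<Union>j\<in>J. Ua j) x = (\<Sum>j\<in>J. cd B (Ua j) x)"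
      by (rule Gadd)
    show "finite C" "finite {\<Union>C}" using C by auto
    show "i \<in> C \<Longrightarrow> T i \<in> sets borel \<and> U i \<in> sets borel" for i
      using C Rect_decomp(3,4) unfolding T_def U_def by blast
    show "j \<in> {\<Union>C} \<Longrightarrow> T j \<in> sets borel \<and> U j \<in> sets borel" for j
      using C Rect_decomp(3,4) unfolding T_def U_def by blast
    fix x y z
    have "(\<Sum>c\<in>C. indicator (S c) x * indicator (T c) y * indicator (U c) z) = (\<Sum>c\<in>C. indicator c (x, y, z) :: ennreal)"
      using C ind by (intro sum.cong refl) auto
    also have "\<dots> = indicator (\<Union>C) (x, y, z)"
    proof -
      have "disjoint_family_on (\<lambda>c. c) C" using C(2) unfolding disjoint_family_on_def disjoint_def disjnt_def by auto
      then have "indicator (\<Union>c\<in>C. c) (x, y, z) = (\<Sum>c\<in>C. indicator c (x, y, z) :: ennreal)"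
        by (rule indicator_UN_disjoint[OF C(3)])
      then show ?thesis by simp
    qed
    also have "\<dots> = (\<Sum>c\<in>{\<Union>C}. indicator (S c) x * indicator (T c) y * indicator (U c) z)"
    proof -
      have sing: "\<And>h :: _ \<Rightarrow> ennreal. (\<Sum>c\<in>{\<Union>C}. h c) = h (\<Union>C)" by simp
      show ?thesis unfolding sing by (rule ind[OF C(4)])
    qed
    finally show "(\<Sum>c\<in>C. indicator (S c) x * indicator (T c) y * indicator (U c) z)
      = (\<Sum>c\<in>{\<Union>C}. indicator (S c) x * indicator (T c) y * indicator (U c) z :: ennreal)" .
  qed
  have Sm: "S c \<in> sets borel" if "c \<in> Rect" for c using Rect_decomp(2)[OF that] unfolding S_def .
  have "muR (\<Union>C) = (\<integral>\<^sup>+x. (\<Sum>c\<in>{\<Union>C}. indicator (S c) x * cd A (T c) x * cd B (U c) x) \<partial>nu)"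
    unfolding muR_def mu0_def S_def T_def U_def by simp
  also have "\<dots> = (\<integral>\<^sup>+x. (\<Sum>c\<in>C. indicator (S c) x * cd A (T c) x * cd B (U c) x) \<partial>nu)"
    using AE by (intro nn_integral_cong_AE) auto
  also have "\<dots> = (\<Sum>c\<in>C. \<integral>\<^sup>+x. indicator (S c) x * cd A (T c) x * cd B (U c) x \<partial>nu)"
  proof (rule nn_integral_sum)
    fix c assume "c \<in> C"
    then have "S c \<in> sets nu" using Sm C by auto
    then show "(\<lambda>x. indicator (S c) x * cd A (T c) x * cd B (U c) x) \<in> borel_measurable nu"
      by (intro borel_measurable_times_ennreal borel_measurable_indicator cdA_m cdB_m)
  qed
  also have "\<dots> = (\<Sum>c\<in>C. muR c)" unfolding muR_def mu0_def S_def T_def U_def by simp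
  finally show "muR (\<Union>C) = (\<Sum>c\<in>C. muR c)" .
qed


lemma inner_reg_e:
  fixes M :: "'d::polish_space measure"
  assumes fM: "finite_measure M" and sM: "sets M = sets borel" and S: "S \<in> sets borel" and e: "e > 0"
  shows "\<exists>K. K \<subseteq> S \<and> compact K \<and> emeasure M (S - K) \<le> ennreal e"
proof -
  interpret M: finite_measure M by (rule fM)
  have SM: "S \<in> sets M" using S sM by simp
  show ?thesis
  proof (cases "measure M S \<le> e")
    case True
    then show ?thesis using SM by (intro exI[of _ "{}"]) (auto simp: M.emeasure_eq_measure intro: ennreal_leI)
  next
    case False
    have "emeasure M S = (SUP K\<in>{K. K \<subseteq> S \<and> compact K}. emeasure M K)"
    proof -
      have fin: "emeasure M (space M) \<noteq> \<infinity>" using M.emeasure_finite by simp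
      show ?thesis using inner_regular[OF sM fin S] by simp
    qed
    moreover have "ennreal (measure M S - e) < emeasure M S"
      using False e by (simp add: M.emeasure_eq_measure ennreal_less_iff)
    ultimately obtain K where K: "K \<subseteq> S" "compact K" "ennreal (measure M S - e) < emeasure M K"
      by (metis (no_types, lifting) less_SUP_iff mem_Collect_eq)
    have KM: "K \<in> sets M" using K(2) sM by (simp add: borel_compact)
    have "measure M S - e < measure M K" using K(3) False by (simp add: M.emeasure_eq_measure ennreal_less_iff)
    moreover have "measure M (S - K) = measure M S - measure M K"
      using M.finite_measure_Diff[OF SM KM K(1)] .
    ultimately have "measure M (S - K) \<le> e" by simp
    then show ?thesis using K M.emeasure_eq_measure by (intro exI[of _ K]) (simp add: ennreal_leI)
  qed
qed

definition "RR = semiring_of_sets.generated_ring (Rect :: ('a \<times> 'b \<times> 'c) set set)"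

lemma ringRR: "ring_of_sets UNIV RR"
  unfolding RR_def by (rule semiring_of_sets.generating_ring[OF semiring_Rect])

lemma Rect_RR: "R \<in> Rect \<Longrightarrow> R \<in> RR"
  unfolding RR_def by (rule semiring_of_sets.generated_ringI_Basic[OF semiring_Rect])

lemma RR_elim: "E \<in> RR \<Longrightarrow> \<exists>C. finite C \<and> C \<subseteq> Rect \<and> E = \<Union>C"
  unfolding RR_def semiring_of_sets.generated_ring_def[OF semiring_Rect] by blast

lemma RR_Un: "a \<in> RR \<Longrightarrow> b \<in> RR \<Longrightarrow> a \<union> b \<in> RR"
  using ringRR by (simp add: ring_of_sets_iff)
lemma RR_Diff: "a \<in> RR \<Longrightarrow> b \<in> RR \<Longrightarrow> a - b \<in> RR"
  using ringRR by (simp add: ring_of_sets_iff)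
lemma RR_empty: "{} \<in> RR"
  using ringRR by (simp add: ring_of_sets_iff)
lemma RR_Int: "a \<in> RR \<Longrightarrow> b \<in> RR \<Longrightarrow> a \<inter> b \<in> RR"
proof -
  assume "a \<in> RR" "b \<in> RR"
  then have "a - (a - b) \<in> RR" by (intro RR_Diff)
  moreover have "a - (a - b) = a \<inter> b" by auto
  ultimately show ?thesis by simp
qed

definition "mu' = (SOME m. volume RR m \<and> (\<forall>a\<in>Rect. m a = muR a))"

lemma mu'_prop: "volume RR mu' \<and> (\<forall>a\<in>Rect. mu' a = muR a)"
proof -
  have "\<exists>m. volume RR m \<and> (\<forall>a\<in>Rect. m a = muR a)"
    unfolding RR_def by (rule semiring_of_sets.extend_volume[OF semiring_Rect vol])
  then show ?thesis unfolding mu'_def by (rule someI_ex)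
qed

lemma mu'_vol: "volume RR mu'" using mu'_prop by blast

lemma mu'_rect: "S \<in> sets borel \<Longrightarrow> T \<in> sets borel \<Longrightarrow> U \<in> sets borel \<Longrightarrow> mu' (S \<times> (T \<times> U)) = mu0 S T U"
  using mu'_prop RectI muR_eq by metis

lemma mu'_empty: "mu' {} = 0" using volume_empty[OF mu'_vol] .

lemma mu'_pos: "positive RR mu'" unfolding positive_def using mu'_empty by simp

lemma mu'_add: "additive RR mu'"
  unfolding additive_def
proof safe
  fix x y assume x: "x \<in> RR" and y: "y \<in> RR" and d: "x \<inter> y = {}"
  show "mu' (x \<union> y) = mu' x + mu' y"
  proof (cases "x = y")
    case True
    then have "x = {}" using d by simp
    then show ?thesis using True mu'_empty by simp
  next
    case False
    have "mu' (\<Union>{x, y}) = (\<Sum>c\<in>{x, y}. mu' c)"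
    proof -
      have V: "\<And>C. C \<subseteq> RR \<Longrightarrow> disjoint C \<Longrightarrow> finite C \<Longrightarrow> \<Union>C \<in> RR \<Longrightarrow> mu' (\<Union>C) = (\<Sum>c\<in>C. mu' c)"
        using mu'_vol unfolding volume_def by blast
      have "disjoint {x, y}" using d unfolding disjoint_def disjnt_def pairwise_def by auto
      moreover have "\<Union>{x, y} \<in> RR" using RR_Un[OF x y] by simp
      ultimately show ?thesis using x y by (intro V) auto
    qed
    then show ?thesis using False by simp
  qed
qed

lemma mu'_mono: "x \<in> RR \<Longrightarrow> y \<in> RR \<Longrightarrow> x \<subseteq> y \<Longrightarrow> mu' x \<le> mu' y"
  using ring_of_sets.additive_increasing[OF ringRR mu'_pos mu'_add] unfolding increasing_def by blast

lemma mu'_sub2: "x \<in> RR \<Longrightarrow> y \<in> RR \<Longrightarrow> mu' (x \<union> y) \<le> mu' x + mu' y"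
proof -
  assume x: "x \<in> RR" and y: "y \<in> RR"
  have "x \<union> y = x \<union> (y - x)" by auto
  moreover have "mu' (x \<union> (y - x)) = mu' x + mu' (y - x)"
    by (rule additiveD[OF mu'_add _ x RR_Diff[OF y x]]) auto
  ultimately have "mu' (x \<union> y) = mu' x + mu' (y - x)" by simp
  also have "\<dots> \<le> mu' x + mu' y" using mu'_mono[OF RR_Diff[OF y x] y] by (intro add_left_mono) auto
  finally show ?thesis .
qed

lemma UNIV_Rect: "(UNIV :: ('a \<times> 'b \<times> 'c) set) \<in> Rect"
  using RectI[of UNIV UNIV UNIV] by simp

lemma mu'_UNIV: "mu' UNIV = emeasure nu UNIV"
  using mu'_rect[of UNIV UNIV UNIV] mu0_S[of UNIV] by simp

lemma mu'_fin: "E \<in> RR \<Longrightarrow> mu' E \<noteq> \<infinity>"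
proof -
  assume E: "E \<in> RR"
  have "mu' E \<le> mu' UNIV" using mu'_mono[OF E Rect_RR[OF UNIV_Rect]] by simp
  also have "\<dots> < \<infinity>" using mu'_UNIV finite_measure.emeasure_finite[OF nu_fin, of UNIV]
    by (simp add: top.not_eq_extremum)
  finally show ?thesis by simp
qed

lemma Q_rect:
  assumes S: "S \<in> sets borel" and T: "T \<in> sets borel" and U: "U \<in> sets borel" and e: "e > 0"
  shows "\<exists>K\<in>RR. K \<subseteq> S \<times> (T \<times> U) \<and> compact K \<and> mu' (S \<times> (T \<times> U) - K) \<le> ennreal e"
proof -
  have e3: "e / 3 > 0" using e by simp
  obtain K1 where K1: "K1 \<subseteq> S" "compact K1" "emeasure nu (S - K1) \<le> ennreal (e / 3)"
    using inner_reg_e[OF nu_fin nu_sets S e3] by blast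
  have fAY: "finite_measure (distr A borel (snd :: 'a \<times> 'b \<Rightarrow> 'b))"
    by (rule finite_measure.finite_measure_distr[OF fA snd_meas_A[OF fA sA]])
  have fBZ: "finite_measure (distr B borel (snd :: 'a \<times> 'c \<Rightarrow> 'c))"
    by (rule finite_measure.finite_measure_distr[OF fB snd_meas_A[OF fB sB]])
  obtain K2 where K2: "K2 \<subseteq> T" "compact K2" "emeasure (distr A borel snd) (T - K2) \<le> ennreal (e / 3)"
    using inner_reg_e[OF fAY _ T e3] by auto
  obtain K3 where K3: "K3 \<subseteq> U" "compact K3" "emeasure (distr B borel snd) (U - K3) \<le> ennreal (e / 3)"
    using inner_reg_e[OF fBZ _ U e3] by auto
  have K1m: "K1 \<in> sets borel" and K2m: "K2 \<in> sets borel" and K3m: "K3 \<in> sets borel"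
    using K1 K2 K3 by (simp_all add: borel_compact)
  define K where "K = K1 \<times> (K2 \<times> K3)"
  have KR: "K \<in> RR" unfolding K_def by (intro Rect_RR RectI K1m K2m K3m)
  have Kc: "compact K" unfolding K_def using K1 K2 K3 by (intro compact_Times) auto
  have Ksub: "K \<subseteq> S \<times> (T \<times> U)" unfolding K_def using K1 K2 K3 by auto
  have SR: "S \<times> (T \<times> U) \<in> RR" by (intro Rect_RR RectI S T U)
  define W1 where "W1 = (S - K1) \<times> ((UNIV :: 'b set) \<times> (UNIV :: 'c set))"
  define W2 where "W2 = (UNIV :: 'a set) \<times> ((T - K2) \<times> (UNIV :: 'c set))"
  define W3 where "W3 = (UNIV :: 'a set) \<times> ((UNIV :: 'b set) \<times> (U - K3))"
  have W1R: "W1 \<in> RR" unfolding W1_def using S K1m by (intro Rect_RR RectI) auto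
  have W2R: "W2 \<in> RR" unfolding W2_def using T K2m by (intro Rect_RR RectI) auto
  have W3R: "W3 \<in> RR" unfolding W3_def using U K3m by (intro Rect_RR RectI) auto
  have "mu' (S \<times> (T \<times> U) - K) \<le> mu' (W1 \<union> W2 \<union> W3)"
    using RR_Diff[OF SR KR] RR_Un[OF RR_Un[OF W1R W2R] W3R]
    by (rule mu'_mono) (auto simp: K_def W1_def W2_def W3_def)
  also have "\<dots> \<le> mu' (W1 \<union> W2) + mu' W3" by (rule mu'_sub2[OF RR_Un[OF W1R W2R] W3R])
  also have "\<dots> \<le> mu' W1 + mu' W2 + mu' W3" using mu'_sub2[OF W1R W2R] by (intro add_right_mono)
  also have "mu' W1 = emeasure nu (S - K1)"
    unfolding W1_def using S K1m mu'_rect[of "S - K1" UNIV UNIV] mu0_S[of "S - K1"] by (simp add: sets.Diff)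
  also have "mu' W2 = emeasure A (UNIV \<times> (T - K2))"
    unfolding W2_def using T K2m by (simp add: mu'_rect mu0_ST sets.Diff)
  also have "\<dots> = emeasure (distr A borel snd) (T - K2)"
    using emeasure_distr[OF snd_meas_A[OF fA sA], of "T - K2"] T K2m space_borel_sets'[OF sA]
    by (simp add: vimage_snd sets.Diff)
  also have "mu' W3 = emeasure B (UNIV \<times> (U - K3))"
    unfolding W3_def using U K3m by (simp add: mu'_rect mu0_SU sets.Diff)
  also have "\<dots> = emeasure (distr B borel snd) (U - K3)"
    using emeasure_distr[OF snd_meas_A[OF fB sB], of "U - K3"] U K3m space_borel_sets'[OF sB]
    by (simp add: vimage_snd sets.Diff)
  also have "emeasure nu (S - K1) + emeasure (distr A borel snd) (T - K2) + emeasure (distr B borel snd) (U - K3)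
      \<le> ennreal (e / 3) + ennreal (e / 3) + ennreal (e / 3)"
    using K1(3) K2(3) K3(3) by (intro add_mono) auto
  also have "\<dots> = ennreal e" using e by (simp add: ennreal_plus[symmetric] del: ennreal_plus)
  finally show ?thesis using KR Ksub Kc by blast
qed

lemma Q_RR:
  assumes E: "E \<in> RR" and e: "e > 0"
  shows "\<exists>K\<in>RR. K \<subseteq> E \<and> compact K \<and> mu' (E - K) \<le> ennreal e"
proof -
  obtain C where C: "finite C" "C \<subseteq> Rect" "E = \<Union>C" using RR_elim[OF E] by blast
  have "\<forall>e>0. \<exists>K\<in>RR. K \<subseteq> \<Union>C \<and> compact K \<and> mu' (\<Union>C - K) \<le> ennreal e"
    using C(1,2)
  proof (induction C rule: finite_induct)
    case empty
    then show ?case using RR_empty mu'_empty by auto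
  next
    case (insert c C)
    show ?case
    proof (intro allI impI)
      fix e :: real assume e: "e > 0"
      obtain S T U where c: "c = S \<times> (T \<times> U)" "S \<in> sets borel" "T \<in> sets borel" "U \<in> sets borel"
        using insert(4) unfolding Rect_def by blast
      obtain K1 where K1: "K1 \<in> RR" "K1 \<subseteq> c" "compact K1" "mu' (c - K1) \<le> ennreal (e / 2)"
        using Q_rect[OF c(2-4), of "e / 2"] e c(1) by auto
      obtain K2 where K2: "K2 \<in> RR" "K2 \<subseteq> \<Union>C" "compact K2" "mu' (\<Union>C - K2) \<le> ennreal (e / 2)"
        using insert(3,4) e by (metis half_gt_zero insert_subset)
      have cR: "c \<in> RR" using insert(4) Rect_RR by auto
      have CR: "\<Union>C \<in> RR" using insert(1,4) ring_of_sets.finite_Union[OF ringRR] Rect_RR by auto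
      have "mu' (c \<union> \<Union>C - (K1 \<union> K2)) \<le> mu' ((c - K1) \<union> (\<Union>C - K2))"
        using RR_Diff[OF RR_Un[OF cR CR] RR_Un[OF K1(1) K2(1)]] RR_Un[OF RR_Diff[OF cR K1(1)] RR_Diff[OF CR K2(1)]]
        by (rule mu'_mono) auto
      also have "\<dots> \<le> mu' (c - K1) + mu' (\<Union>C - K2)"
        by (rule mu'_sub2[OF RR_Diff[OF cR K1(1)] RR_Diff[OF CR K2(1)]])
      also have "\<dots> \<le> ennreal (e / 2) + ennreal (e / 2)" using K1(4) K2(4) by (intro add_mono)
      also have "\<dots> = ennreal e" using e by (simp add: ennreal_plus[symmetric] del: ennreal_plus)
      finally have "mu' (c \<union> \<Union>C - (K1 \<union> K2)) \<le> ennreal e" .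
      then show "\<exists>K\<in>RR. K \<subseteq> \<Union>(insert c C) \<and> compact K \<and> mu' (\<Union>(insert c C) - K) \<le> ennreal e"
        using K1 K2 by (intro bexI[of _ "K1 \<union> K2"] RR_Un) (auto intro: compact_Un)
    qed
  qed
  then show ?thesis using C(3) e by blast
qed


lemma geom_half: "(\<Sum>i\<le>n. (1/2::real) ^ i) = 2 - (1/2) ^ n"
  by (induction n) (auto simp: field_simps)

lemma mu'_cont:
  assumes E: "range E \<subseteq> RR" and dec: "decseq E" and emp: "(\<Inter>i. E i) = {}"
  shows "(\<lambda>i. mu' (E i)) \<longlonglongrightarrow> 0"
proof -
  have ER: "E n \<in> RR" for n using E by auto
  have dmu: "decseq (\<lambda>i. mu' (E i))"
    unfolding decseq_def using dec ER by (auto intro!: mu'_mono simp: decseq_def)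
  have lim: "(\<lambda>i. mu' (E i)) \<longlonglongrightarrow> (INF i. mu' (E i))"
    using LIMSEQ_INF[OF dmu] by simp
  have "(INF i. mu' (E i)) = 0"
  proof (rule ccontr)
    assume nz: "(INF i. mu' (E i)) \<noteq> 0"
    have "(INF i. mu' (E i)) \<le> mu' (E 0)" by (rule INF_lower) simp
    then have "(INF i. mu' (E i)) \<noteq> \<infinity>" using mu'_fin[OF ER[of 0]] by (auto simp: top_unique)
    then obtain d where d: "(INF i. mu' (E i)) = ennreal d" "d \<ge> 0" by (cases "(INF i. mu' (E i))") auto
    then have dpos: "d > 0" using nz by (cases "d = 0") auto
    have ge: "ennreal d \<le> mu' (E n)" for n using d(1) by (metis INF_lower UNIV_I)
    define eps where "eps n = d / 4 * (1/2) ^ n" for n :: nat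
    have epos: "eps n > 0" for n unfolding eps_def using dpos by simp
    define K where "K n = (SOME K. K \<in> RR \<and> K \<subseteq> E n \<and> compact K \<and> mu' (E n - K) \<le> ennreal (eps n))" for n
    have K: "K n \<in> RR \<and> K n \<subseteq> E n \<and> compact (K n) \<and> mu' (E n - K n) \<le> ennreal (eps n)" for n
    proof -
      have "\<exists>K. K \<in> RR \<and> K \<subseteq> E n \<and> compact K \<and> mu' (E n - K) \<le> ennreal (eps n)"
        using Q_RR[OF ER epos] by blast
      then show ?thesis unfolding K_def by (rule someI_ex)
    qed
    define L where "L n = (\<Inter>i\<in>{..n}. K i)" for n
    have L: "L n \<in> RR \<and> compact (L n)" for n
    proof (induction n)
      case 0
      then show ?case using K[of 0] by (simp add: L_def)
    next
      case (Suc n)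
      have "L (Suc n) = L n \<inter> K (Suc n)" unfolding L_def by (auto simp: atMost_Suc)
      then show ?case using Suc K[of "Suc n"] by (auto intro: RR_Int compact_Int)
    qed
    have Lmono: "L n \<subseteq> L m" if "m \<le> n" for m n unfolding L_def using that by auto
    have LE: "L n \<subseteq> E n" for n unfolding L_def using K[of n] by auto
    have small: "mu' (E n - L n) \<le> ennreal (d / 2)" for n
    proof -
      have "E n - L n \<subseteq> (\<Union>i\<in>{..n}. E i - K i)"
        unfolding L_def using dec by (auto simp: decseq_def) 
      then have "mu' (E n - L n) \<le> mu' (\<Union>i\<in>{..n}. E i - K i)"
        using ER K L by (intro mu'_mono RR_Diff ring_of_sets.finite_UN[OF ringRR]) auto
      also have "\<dots> \<le> (\<Sum>i\<in>{..n}. mu' (E i - K i))"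
        using ER K by (intro ring_of_sets.subadditive[OF ringRR mu'_pos mu'_add]) (auto intro: RR_Diff)
      also have "\<dots> \<le> (\<Sum>i\<in>{..n}. ennreal (eps i))" using K by (intro sum_mono) auto
      also have "\<dots> = ennreal (\<Sum>i\<in>{..n}. eps i)" using epos by (intro sum_ennreal) (simp add: less_imp_le)
      also have "(\<Sum>i\<in>{..n}. eps i) = d / 4 * (2 - (1/2) ^ n)"
        unfolding eps_def sum_distrib_left[symmetric] geom_half ..
      also have "\<dots> \<le> d / 2" using dpos by (simp add: field_simps)
      finally show ?thesis by (simp add: ennreal_leI)
    qed
    have Lne: "L n \<noteq> {}" for n
    proof
      assume "L n = {}"
      have "mu' (E n) \<le> mu' (L n \<union> (E n - L n))"
        using ER L by (intro mu'_mono RR_Un RR_Diff) auto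
      also have "\<dots> \<le> mu' (L n) + mu' (E n - L n)" using ER L by (intro mu'_sub2 RR_Diff) auto
      also have "\<dots> \<le> ennreal (d / 2)" using \<open>L n = {}\<close> mu'_empty small[of n] by simp
      also have "\<dots> < ennreal d" using dpos by (simp add: ennreal_less_iff)
      finally show False using ge[of n] by simp
    qed
    have "L 0 \<inter> (\<Inter>(range L)) \<noteq> {}"
    proof (rule compact_imp_fip)
      show "compact (L 0)" using L by simp
      show "closed T" if "T \<in> range L" for T using that L by (auto intro: compact_imp_closed)
      fix F' assume F': "finite F'" "F' \<subseteq> range L"
      then obtain N where N: "finite N" "F' = L ` N" by (metis finite_subset_image)
      define m where "m = Max (insert 0 N)"
      have "n \<le> m" if "n \<in> N" for n unfolding m_def using N(1) that by simp
      then have "L m \<subseteq> L n" if "n \<in> N" for n using Lmono that by blast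
      moreover have "L m \<subseteq> L 0" using Lmono by simp
      ultimately have "L m \<subseteq> L 0 \<inter> \<Inter>F'" using N(2) by auto
      then show "L 0 \<inter> \<Inter>F' \<noteq> {}" using Lne[of m] by blast
    qed
    then have "(\<Inter>n. L n) \<noteq> {}" by blast
    moreover have "(\<Inter>n. L n) \<subseteq> (\<Inter>n. E n)" using LE by auto
    ultimately show False using emp by auto
  qed
  then show ?thesis using lim by simp
qed

definition "mu2 = (SOME m. (\<forall>s\<in>RR. m s = mu' s) \<and> measure_space UNIV (sigma_sets UNIV RR) m)"

lemma mu2_prop: "(\<forall>s\<in>RR. mu2 s = mu' s) \<and> measure_space UNIV (sigma_sets UNIV RR) mu2"
proof -
  have "\<exists>m. (\<forall>s\<in>RR. m s = mu' s) \<and> measure_space UNIV (sigma_sets UNIV RR) m"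
    by (rule ring_of_sets.caratheodory_empty_continuous[OF ringRR mu'_pos mu'_add mu'_fin mu'_cont])
  then show ?thesis unfolding mu2_def by (rule someI_ex)
qed

lemma sigma_RR: "sigma_sets UNIV RR = sigma_sets UNIV (Rect :: ('a \<times> 'b \<times> 'c) set set)"
  unfolding RR_def by (rule semiring_of_sets.sigma_sets_generated_ring_eq[OF semiring_Rect])

lemma borel_pair_gen:
  "sets (borel :: ('d::second_countable_topology \<times> 'e::second_countable_topology) measure)
    = sigma_sets UNIV {a \<times> b | a b. a \<in> sets borel \<and> b \<in> sets borel}"
proof -
  have "sets (borel :: ('d \<times> 'e) measure) = sets ((borel :: 'd measure) \<Otimes>\<^sub>M (borel :: 'e measure))"
    unfolding borel_prod ..
  then show ?thesis by (simp add: sets_pair_measure)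
qed

lemma borel_Rect: "sets (borel :: ('a \<times> 'b \<times> 'c) measure) = sigma_sets UNIV Rect"
proof -
  define Eb where "Eb = {a \<times> b | a b. a \<in> sets (borel :: 'b measure) \<and> b \<in> sets (borel :: 'c measure)}"
  have "sets (borel :: ('a \<times> 'b \<times> 'c) measure) = sets ((borel :: 'a measure) \<Otimes>\<^sub>M (borel :: ('b \<times> 'c) measure))"
    unfolding borel_prod ..
  also have "\<dots> = sets (sigma (space (borel :: 'a measure) \<times> space (borel :: ('b \<times> 'c) measure))
      {a \<times> b | a b. a \<in> sets borel \<and> b \<in> Eb})"
  proof (rule sets_pair_eq[where Ca="{UNIV}" and Cb="{UNIV}"])
    show "sets (borel :: 'a measure) \<subseteq> Pow (space borel)" by simp
    show "sets (borel :: 'a measure) = sigma_sets (space borel) (sets borel)" by (rule sets.sigma_sets_eq[symmetric])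
    show "Eb \<subseteq> Pow (space (borel :: ('b \<times> 'c) measure))" by simp
    show "sets (borel :: ('b \<times> 'c) measure) = sigma_sets (space borel) Eb"
      unfolding Eb_def by (simp add: borel_pair_gen)
    show "{UNIV} \<subseteq> Eb" unfolding Eb_def by (auto intro!: exI[of _ UNIV])
  qed auto
  also have "{a \<times> b | a b. a \<in> sets borel \<and> b \<in> Eb} = Rect"
    unfolding Eb_def Rect_def by blast
  finally show ?thesis by (simp add: sets_measure_of_conv)
qed

definition "Gm = measure_of UNIV (sigma_sets UNIV (Rect :: ('a \<times> 'b \<times> 'c) set set)) mu2"

lemma sets_Gm: "sets Gm = sets borel"
  unfolding Gm_def borel_Rect by (simp add: sets_measure_of_conv sigma_sets_sigma_sets_eq)

lemma emeasure_Gm: "X \<in> sigma_sets UNIV Rect \<Longrightarrow> emeasure Gm X = mu2 X"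
  unfolding Gm_def
proof (rule emeasure_measure_of_sigma)
  have ms: "measure_space UNIV (sigma_sets UNIV Rect) mu2" using mu2_prop sigma_RR by simp
  then show "sigma_algebra UNIV (sigma_sets UNIV (Rect :: ('a \<times> 'b \<times> 'c) set set))"
    "positive (sigma_sets UNIV Rect) mu2" "countably_additive (sigma_sets UNIV Rect) mu2"
    unfolding measure_space_def by auto
qed

lemma emeasure_Gm_rect:
  assumes "S \<in> sets borel" "T \<in> sets borel" "U \<in> sets borel"
  shows "emeasure Gm (S \<times> (T \<times> U)) = mu0 S T U"
proof -
  have R: "S \<times> (T \<times> U) \<in> Rect" using assms by (rule RectI)
  then have "emeasure Gm (S \<times> (T \<times> U)) = mu2 (S \<times> (T \<times> U))" by (intro emeasure_Gm) auto
  also have "\<dots> = mu' (S \<times> (T \<times> U))" using mu2_prop Rect_RR[OF R] by simp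
  also have "\<dots> = mu0 S T U" using mu'_rect[OF assms] .
  finally show ?thesis .
qed

lemma Gm_fin: "finite_measure Gm"
proof (rule finite_measureI)
  have sp: "space Gm = UNIV" using sets_Gm by (rule space_borel_sets')
  have "emeasure Gm (UNIV \<times> (UNIV \<times> UNIV)) = mu0 UNIV UNIV UNIV" by (rule emeasure_Gm_rect) auto
  also have "\<dots> = emeasure nu UNIV" by (rule mu0_S) simp
  finally show "emeasure Gm (space Gm) \<noteq> \<infinity>"
    using finite_measure.emeasure_finite[OF nu_fin, of UNIV] sp by simp
qed

lemma marg_gen:
  fixes M :: "('d::second_countable_topology \<times> 'e::second_countable_topology) measure"
  assumes sN: "sets N = sets borel" and sM: "sets M = sets borel" and fN: "finite_measure N"
    and eq: "\<And>S T. S \<in> sets borel \<Longrightarrow> T \<in> sets borel \<Longrightarrow> emeasure N (S \<times> T) = emeasure M (S \<times> T)"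
  shows "N = M"
proof (rule measure_eqI_generator_eq[where E="{a \<times> b | a b. a \<in> sets borel \<and> b \<in> sets borel}" and \<Omega>=UNIV and A="\<lambda>_. UNIV"])
  show "Int_stable {a \<times> b | a b. a \<in> sets (borel :: 'd measure) \<and> b \<in> sets (borel :: 'e measure)}"
    unfolding Int_stable_def
  proof safe
    fix S T S' T' :: "_ set" assume "S \<in> sets (borel :: 'd measure)" "T \<in> sets (borel :: 'e measure)"
      "S' \<in> sets (borel :: 'd measure)" "T' \<in> sets (borel :: 'e measure)"
    then show "\<exists>a b. S \<times> T \<inter> S' \<times> T' = a \<times> b \<and> a \<in> sets borel \<and> b \<in> sets borel"
      by (intro exI[of _ "S \<inter> S'"] exI[of _ "T \<inter> T'"]) auto
  qed
  show "sets N = sigma_sets UNIV {a \<times> b | a b. a \<in> sets borel \<and> b \<in> sets borel}" using sN borel_pair_gen by simp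
  show "sets M = sigma_sets UNIV {a \<times> b | a b. a \<in> sets borel \<and> b \<in> sets borel}" using sM borel_pair_gen by simp
  show "range (\<lambda>_. UNIV) \<subseteq> {a \<times> b | a b. a \<in> sets (borel :: 'd measure) \<and> b \<in> sets (borel :: 'e measure)}"
    by (auto intro!: exI[of _ UNIV])
  show "emeasure N UNIV \<noteq> \<infinity>" for i :: nat
    using finite_measure.emeasure_finite[OF fN, of UNIV] by simp
qed (use eq in auto)

lemma glue_main:
  "\<exists>G :: ('a \<times> 'b \<times> 'c) measure. finite_measure G \<and> sets G = sets borel \<and>
     distr G borel (\<lambda>p. (fst p, fst (snd p))) = A \<and> distr G borel (\<lambda>p. (fst p, snd (snd p))) = B"
proof (intro exI conjI)
  show "finite_measure Gm" by (rule Gm_fin)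
  show "sets Gm = sets borel" by (rule sets_Gm)
  have c1: "(\<lambda>p::'a \<times> 'b \<times> 'c. (fst p, fst (snd p))) \<in> measurable Gm borel"
    using sets_Gm by (intro borel_meas_cont continuous_intros)
  have c2: "(\<lambda>p::'a \<times> 'b \<times> 'c. (fst p, snd (snd p))) \<in> measurable Gm borel"
    using sets_Gm by (intro borel_meas_cont continuous_intros)
  have spG: "space Gm = UNIV" using sets_Gm by (rule space_borel_sets')
  show "distr Gm borel (\<lambda>p. (fst p, fst (snd p))) = A"
  proof (rule marg_gen)
    show "finite_measure (distr Gm borel (\<lambda>p. (fst p, fst (snd p))))"
      by (rule finite_measure.finite_measure_distr[OF Gm_fin c1])
    fix S :: "'a set" and T :: "'b set" assume S: "S \<in> sets borel" and T: "T \<in> sets borel"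
    have "emeasure (distr Gm borel (\<lambda>p. (fst p, fst (snd p)))) (S \<times> T)
        = emeasure Gm ((\<lambda>p. (fst p, fst (snd p))) -` (S \<times> T) \<inter> space Gm)"
      by (rule emeasure_distr[OF c1 times_borel[OF S T]])
    also have "(\<lambda>p. (fst p, fst (snd p))) -` (S \<times> T) \<inter> space Gm = S \<times> (T \<times> UNIV)" using spG by auto
    also have "emeasure Gm (S \<times> (T \<times> UNIV)) = mu0 S T UNIV" using S T by (intro emeasure_Gm_rect) auto
    also have "\<dots> = emeasure A (S \<times> T)" by (rule mu0_ST[OF S T])
    finally show "emeasure (distr Gm borel (\<lambda>p. (fst p, fst (snd p)))) (S \<times> T) = emeasure A (S \<times> T)" .
  qed (simp_all add: sA)
  show "distr Gm borel (\<lambda>p. (fst p, snd (snd p))) = B"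
  proof (rule marg_gen)
    show "finite_measure (distr Gm borel (\<lambda>p. (fst p, snd (snd p))))"
      by (rule finite_measure.finite_measure_distr[OF Gm_fin c2])
    fix S :: "'a set" and U :: "'c set" assume S: "S \<in> sets borel" and U: "U \<in> sets borel"
    have "emeasure (distr Gm borel (\<lambda>p. (fst p, snd (snd p)))) (S \<times> U)
        = emeasure Gm ((\<lambda>p. (fst p, snd (snd p))) -` (S \<times> U) \<inter> space Gm)"
      by (rule emeasure_distr[OF c2 times_borel[OF S U]])
    also have "(\<lambda>p. (fst p, snd (snd p))) -` (S \<times> U) \<inter> space Gm = S \<times> (UNIV \<times> U)" using spG by auto
    also have "emeasure Gm (S \<times> (UNIV \<times> U)) = mu0 S UNIV U" using S U by (intro emeasure_Gm_rect) auto
    also have "\<dots> = emeasure B (S \<times> U)" by (rule mu0_SU[OF S U])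
    finally show "emeasure (distr Gm borel (\<lambda>p. (fst p, snd (snd p)))) (S \<times> U) = emeasure B (S \<times> U)" .
  qed (simp_all add: sB)
qed

end

instance prod :: (polish_space, polish_space) polish_space ..

lemma glue:
  fixes A :: "('a::polish_space \<times> 'b::polish_space) measure" and B :: "('a \<times> 'c::polish_space) measure"
  assumes "finite_measure A" "finite_measure B" "sets A = sets borel" "sets B = sets borel"
    "distr A borel fst = distr B borel fst"
  shows "\<exists>G :: ('a \<times> 'b \<times> 'c) measure. finite_measure G \<and> sets G = sets borel \<and>
     distr G borel (\<lambda>p. (fst p, fst (snd p))) = A \<and> distr G borel (\<lambda>p. (fst p, snd (snd p))) = B"
  by (rule glue_main[OF assms])

lemma space_borel_sets: "sets M = sets (borel::'a::topological_space measure) \<Longrightarrow> space M = UNIV"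
  by (metis sets_eq_imp_space_eq space_borel)

lemma distr_distr_cont:
  assumes "sets M = sets borel" "continuous_on UNIV f" "continuous_on UNIV g"
  shows "distr (distr M borel f) borel g = distr M borel (\<lambda>x. g (f x))"
  using assms by (subst distr_distr) (auto intro!: borel_meas_cont simp: comp_def)

lemma emeasure_distr_cont:
  assumes "sets M = sets borel" "continuous_on UNIV f" "A \<in> sets borel"
  shows "emeasure (distr M borel f) A = emeasure M (f -` A)"
  using assms emeasure_distr[OF borel_meas_cont[OF assms(2,1)] assms(3)] space_borel_sets[OF assms(1)] by simp

lemma vimage_cont_sets:
  assumes "sets M = sets borel" "continuous_on UNIV f" "A \<in> sets borel"
  shows "f -` A \<in> sets M"
proof -
  have "f -` A \<inter> space M \<in> sets M" by (rule measurable_sets[OF borel_meas_cont[OF assms(2,1)] assms(3)])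
  then show ?thesis using space_borel_sets[OF assms(1)] by simp
qed

lemma finite_distr_cont:
  assumes "finite_measure M" "sets M = sets borel" "continuous_on UNIV f"
  shows "finite_measure (distr M borel f)"
  using assms by (intro finite_measure.finite_measure_distr borel_meas_cont)

theorem lemma1:
  fixes P Q :: "('x::polish_space \<times> 'y::polish_space) measure"
  assumes "prob_space P" and "sets P = sets borel"
    and "prob_space Q" and "sets Q = sets borel"
  shows "\<exists>\<pi> :: (('x \<times> 'y) \<times> ('x \<times> 'y)) measure.
           prob_space \<pi> \<and> sets \<pi> = sets borel \<and>
           distr \<pi> borel fst = P \<and> distr \<pi> borel snd = Q \<and>
           measure \<pi> {z. fst z \<noteq> snd z} = tv_dist P Q \<and>
           measure \<pi> {z. fst (fst z) \<noteq> fst (snd z)} =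
             tv_dist (distr P borel fst) (distr Q borel fst)"
proof -
  interpret P: prob_space P by fact
  interpret Q: prob_space Q by fact
  have sP: "sets P = sets borel" and sQ: "sets Q = sets borel" by fact+
  have sQP: "sets Q = sets P" using sP sQ by simp
  obtain m P1 Q1 G where fm: "finite_measure m" and fP1: "finite_measure P1" and fQ1: "finite_measure Q1"
    and sm0: "sets m = sets P" and sP10: "sets P1 = sets P" and sQ10: "sets Q1 = sets P"
    and eqP: "P = msum m P1" and eqQ: "Q = msum m Q1" and G0: "G \<in> sets P"
    and P1G0: "emeasure P1 (space P - G) = 0" and Q1G: "emeasure Q1 G = 0"
    using decomp[OF P.finite_measure_axioms Q.finite_measure_axioms sQP] by blast
  interpret m: finite_measure m by fact
  interpret P1: finite_measure P1 by fact
  interpret Q1: finite_measure Q1 by fact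
  have sm: "sets m = sets borel" and sP1: "sets P1 = sets borel" and sQ1: "sets Q1 = sets borel"
    using sm0 sP10 sQ10 sP by simp_all
  have spP: "space P = UNIV" using sP by (rule space_borel_sets)
  have spm: "space m = UNIV" using sm by (rule space_borel_sets)
  have spP1: "space P1 = UNIV" using sP1 by (rule space_borel_sets)
  have spQ1: "space Q1 = UNIV" using sQ1 by (rule space_borel_sets)
  have GB: "G \<in> sets borel" using G0 sP by simp
  have P1G: "emeasure P1 (UNIV - G) = 0" using P1G0 spP by simp
  have "emeasure P UNIV = emeasure m UNIV + emeasure P1 UNIV"
    using eqP emeasure_msum[of P1 m UNIV] sP1 sm spm by (metis sets.top)
  moreover have "emeasure Q UNIV = emeasure m UNIV + emeasure Q1 UNIV"
    using eqQ emeasure_msum[of Q1 m UNIV] sQ1 sm spm by (metis sets.top)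
  moreover have "emeasure P UNIV = 1" using P.emeasure_space_1 spP by simp
  moreover have "emeasure Q UNIV = 1" using Q.emeasure_space_1 sQ by (simp add: space_borel_sets)
  ultimately have massP: "emeasure m UNIV + emeasure P1 UNIV = 1"
    and massQ: "emeasure m UNIV + emeasure Q1 UNIV = 1" by simp_all
  have eqmass: "emeasure m UNIV + emeasure P1 UNIV = emeasure m UNIV + emeasure Q1 UNIV"
    using massP massQ by (metis (no_types))
  have P1Q1: "emeasure P1 UNIV = emeasure Q1 UNIV"
    using ennreal_add_left_cancel[THEN iffD1, OF eqmass] m.emeasure_finite[of UNIV] by auto
  define PX1 where "PX1 = distr P1 borel (fst :: 'x \<times> 'y \<Rightarrow> 'x)"
  define QX1 where "QX1 = distr Q1 borel (fst :: 'x \<times> 'y \<Rightarrow> 'x)"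
  have fPX1: "finite_measure PX1" unfolding PX1_def using fP1 sP1 by (intro finite_distr_cont continuous_intros)
  have fQX1: "finite_measure QX1" unfolding QX1_def using fQ1 sQ1 by (intro finite_distr_cont continuous_intros)
  have sPX1: "sets PX1 = sets borel" and sQX1: "sets QX1 = sets borel" unfolding PX1_def QX1_def by simp_all
  have "emeasure PX1 (space PX1) = emeasure Q1 UNIV"
    unfolding PX1_def using P1Q1 sP1 by (simp add: emeasure_distr_cont continuous_intros)
  moreover have "emeasure QX1 (space QX1) = emeasure Q1 UNIV"
    unfolding QX1_def using sQ1 by (simp add: emeasure_distr_cont continuous_intros)
  ultimately have massX: "emeasure PX1 (space PX1) = emeasure QX1 (space QX1)" by simp
  obtain \<kappa> :: "('x \<times> 'x) measure" where f\<kappa>: "finite_measure \<kappa>" and s\<kappa>: "sets \<kappa> = sets borel"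
    and \<kappa>1: "distr \<kappa> borel fst = PX1" and \<kappa>2: "distr \<kappa> borel snd = QX1"
    and \<kappa>Ne: "measure \<kappa> {z. fst z \<noteq> snd z} = tv_dist PX1 QX1"
    using maxcoupling[OF fPX1 fQX1 sPX1 sQX1 massX] by blast
  have mX: "distr P1 borel fst = distr \<kappa> borel fst" using \<kappa>1 PX1_def by simp
  obtain \<gamma>1 :: "('x \<times> 'y \<times> 'x) measure" where f\<gamma>1: "finite_measure \<gamma>1" and s\<gamma>1: "sets \<gamma>1 = sets borel"
    and \<gamma>1a: "distr \<gamma>1 borel (\<lambda>p. (fst p, fst (snd p))) = P1"
    and \<gamma>1b: "distr \<gamma>1 borel (\<lambda>p. (fst p, snd (snd p))) = \<kappa>"
    using glue[OF fP1 f\<kappa> sP1 s\<kappa> mX] by blast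
  define \<gamma>1' where "\<gamma>1' = distr \<gamma>1 borel (\<lambda>p. (snd (snd p), (fst p, fst (snd p))))"
  have f\<gamma>1': "finite_measure \<gamma>1'" unfolding \<gamma>1'_def using f\<gamma>1 s\<gamma>1 by (intro finite_distr_cont continuous_intros)
  have s\<gamma>1': "sets \<gamma>1' = sets borel" unfolding \<gamma>1'_def by simp
  have "distr \<gamma>1' borel fst = distr \<gamma>1 borel (\<lambda>p. snd (snd p))"
    unfolding \<gamma>1'_def using s\<gamma>1 by (subst distr_distr_cont) (auto intro!: continuous_intros)
  also have "\<dots> = distr \<kappa> borel snd"
    unfolding \<gamma>1b[symmetric] using s\<gamma>1 by (subst distr_distr_cont) (auto intro!: continuous_intros)
  finally have \<gamma>1'fst: "distr Q1 borel fst = distr \<gamma>1' borel fst" using \<kappa>2 QX1_def by simp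
  obtain \<gamma>2 :: "('x \<times> 'y \<times> ('x \<times> 'y)) measure" where f\<gamma>2: "finite_measure \<gamma>2" and s\<gamma>2: "sets \<gamma>2 = sets borel"
    and \<gamma>2a: "distr \<gamma>2 borel (\<lambda>p. (fst p, fst (snd p))) = Q1"
    and \<gamma>2b: "distr \<gamma>2 borel (\<lambda>p. (fst p, snd (snd p))) = \<gamma>1'"
    using glue[OF fQ1 f\<gamma>1' sQ1 s\<gamma>1' \<gamma>1'fst] by blast
  define \<rho> where "\<rho> = distr \<gamma>2 borel (\<lambda>p. (snd (snd p), (fst p, fst (snd p))))"
  have f\<rho>: "finite_measure \<rho>" unfolding \<rho>_def using f\<gamma>2 s\<gamma>2 by (intro finite_distr_cont continuous_intros)
  have s\<rho>: "sets \<rho> = sets borel" unfolding \<rho>_def by simp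
  have \<rho>1: "distr \<rho> borel fst = P1"
  proof -
    have "distr \<rho> borel fst = distr \<gamma>2 borel (\<lambda>p. snd (snd p))"
      unfolding \<rho>_def using s\<gamma>2 by (subst distr_distr_cont) (auto intro!: continuous_intros)
    also have "\<dots> = distr \<gamma>1' borel snd"
      unfolding \<gamma>2b[symmetric] using s\<gamma>2 by (subst distr_distr_cont) (auto intro!: continuous_intros)
    also have "\<dots> = distr \<gamma>1 borel (\<lambda>p. (fst p, fst (snd p)))"
      unfolding \<gamma>1'_def using s\<gamma>1 by (subst distr_distr_cont) (auto intro!: continuous_intros)
    finally show ?thesis using \<gamma>1a by simp
  qed
  have \<rho>2: "distr \<rho> borel snd = Q1"
    unfolding \<rho>_def \<gamma>2a[symmetric] using s\<gamma>2 by (subst distr_distr_cont) (auto intro!: continuous_intros)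
  have \<rho>X: "distr \<rho> borel (\<lambda>z. (fst (fst z), fst (snd z))) = \<kappa>"
  proof -
    have "distr \<rho> borel (\<lambda>z. (fst (fst z), fst (snd z))) = distr \<gamma>2 borel (\<lambda>p. (fst (snd (snd p)), fst p))"
      unfolding \<rho>_def using s\<gamma>2 by (subst distr_distr_cont) (auto intro!: continuous_intros)
    also have "\<dots> = distr \<gamma>1' borel (\<lambda>p. (fst (snd p), fst p))"
      unfolding \<gamma>2b[symmetric] using s\<gamma>2 by (subst distr_distr_cont) (auto intro!: continuous_intros)
    also have "\<dots> = distr \<gamma>1 borel (\<lambda>p. (fst p, snd (snd p)))"
      unfolding \<gamma>1'_def using s\<gamma>1 by (subst distr_distr_cont) (auto intro!: continuous_intros)
    finally show ?thesis using \<gamma>1b by simp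
  qed
  define \<Delta> where "\<Delta> = distr m borel (\<lambda>w::'x \<times> 'y. (w, w))"
  have s\<Delta>: "sets \<Delta> = sets (borel :: (('x \<times> 'y) \<times> ('x \<times> 'y)) measure)" unfolding \<Delta>_def by simp
  have f\<Delta>: "finite_measure \<Delta>" unfolding \<Delta>_def using fm sm by (intro finite_distr_cont continuous_intros)
  define \<pi> where "\<pi> = msum \<Delta> \<rho>"
  have s\<pi>: "sets \<pi> = sets borel" unfolding \<pi>_def using s\<Delta> by simp
  have \<Delta>1: "distr \<Delta> borel fst = m" and \<Delta>2: "distr \<Delta> borel snd = m"
    unfolding \<Delta>_def using sm by (subst distr_distr_cont; auto intro!: continuous_intros distr_id2)+
  have meas_fst: "fst \<in> measurable \<Delta> borel" "snd \<in> measurable \<Delta> borel"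
    using s\<Delta> by (auto intro!: borel_meas_cont continuous_intros)
  have \<pi>1: "distr \<pi> borel fst = P"
    unfolding \<pi>_def using s\<rho> s\<Delta> meas_fst by (subst distr_msum) (auto simp: \<Delta>1 \<rho>1 eqP)
  have \<pi>2: "distr \<pi> borel snd = Q"
    unfolding \<pi>_def using s\<rho> s\<Delta> meas_fst by (subst distr_msum) (auto simp: \<Delta>2 \<rho>2 eqQ)
  have \<rho>UNIV: "emeasure \<rho> UNIV = emeasure P1 UNIV"
    using \<rho>1 s\<rho> emeasure_distr_cont[of \<rho> fst UNIV, OF s\<rho> continuous_on_fst[OF continuous_on_id]] by simp
  have prob: "prob_space \<pi>"
  proof (rule prob_spaceI)
    have "emeasure \<pi> UNIV = emeasure \<Delta> UNIV + emeasure \<rho> UNIV"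
      unfolding \<pi>_def using s\<rho> s\<Delta> by (subst emeasure_msum) auto
    also have "emeasure \<Delta> UNIV = emeasure m UNIV"
      unfolding \<Delta>_def using sm by (simp add: emeasure_distr_cont continuous_intros)
    finally show "emeasure \<pi> (space \<pi>) = 1" using massP \<rho>UNIV s\<pi> space_borel_sets by metis
  qed
  define Ne where "Ne = {z::('x \<times> 'y) \<times> ('x \<times> 'y). fst z \<noteq> snd z}"
  have NeB: "Ne \<in> sets borel" unfolding Ne_def by (rule sets_Ne)
  have "emeasure \<Delta> Ne = 0"
    unfolding \<Delta>_def using NeB sm by (simp add: emeasure_distr_cont continuous_intros Ne_def)
  then have m\<Delta>Ne: "measure \<Delta> Ne = 0" by (simp add: measure_def)
  define Eq where "Eq = {z::('x \<times> 'y) \<times> ('x \<times> 'y). fst z = snd z}"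
  have EqNe: "Eq = UNIV - Ne" by (auto simp: Eq_def Ne_def)
  have EqB: "Eq \<in> sets borel" unfolding EqNe using sets.Diff[OF sets.top NeB] by simp
  have GcB: "UNIV - G \<in> sets borel" using sets.Diff[OF sets.top GB] by simp
  have R1: "fst -` (UNIV - G) \<in> sets \<rho>" by (rule vimage_cont_sets[OF s\<rho> continuous_on_fst[OF continuous_on_id] GcB])
  have R2: "snd -` G \<in> sets \<rho>" by (rule vimage_cont_sets[OF s\<rho> continuous_on_snd[OF continuous_on_id] GB])
  have "emeasure \<rho> (fst -` (UNIV - G)) = emeasure P1 (UNIV - G)"
    using \<rho>1 GcB emeasure_distr_cont[of \<rho> fst "UNIV - G", OF s\<rho> continuous_on_fst[OF continuous_on_id]] by simp
  moreover have "emeasure \<rho> (snd -` G) = emeasure Q1 G"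
    using \<rho>2 GB emeasure_distr_cont[of \<rho> snd G, OF s\<rho> continuous_on_snd[OF continuous_on_id]] by simp
  moreover have "emeasure \<rho> Eq \<le> emeasure \<rho> (fst -` (UNIV - G) \<union> snd -` G)"
    by (rule emeasure_mono) (use R1 R2 in \<open>auto simp: Eq_def\<close>)
  moreover have "\<dots> \<le> emeasure \<rho> (fst -` (UNIV - G)) + emeasure \<rho> (snd -` G)"
    by (rule emeasure_subadditive[OF R1 R2])
  ultimately have \<rho>Eq: "emeasure \<rho> Eq = 0" using P1G Q1G by simp
  have "emeasure \<rho> UNIV = emeasure \<rho> Ne + emeasure \<rho> Eq"
  proof -
    have "Ne \<union> Eq = UNIV" "Ne \<inter> Eq = {}" by (auto simp: Ne_def Eq_def)
    moreover have "Ne \<in> sets \<rho>" "Eq \<in> sets \<rho>" using NeB EqB s\<rho> by simp_all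
    ultimately show ?thesis using plus_emeasure[of Ne \<rho> Eq] by simp
  qed
  then have "emeasure \<rho> Ne = emeasure P1 UNIV" using \<rho>Eq \<rho>UNIV by simp
  then have m\<rho>Ne: "measure \<rho> Ne = measure P1 UNIV" by (simp add: measure_def)
  have m\<pi>Ne: "measure \<pi> Ne = measure P1 UNIV"
    unfolding \<pi>_def using measure_msum[OF f\<Delta> f\<rho> _, of Ne] s\<rho> s\<Delta> NeB m\<Delta>Ne m\<rho>Ne by simp
  have tvPQ: "tv_dist P Q = measure P1 UNIV"
  proof -
    have "tv_dist P Q = tv_dist P1 Q1"
      unfolding eqP eqQ using fm fP1 fQ1 sP1 sQ1 sm by (intro tv_dist_msum) auto
    also have "\<dots> = measure P1 (space P1)"
    proof (rule tv_dist_sing[OF fP1 fQ1 _ _ _ Q1G])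
      show "sets Q1 = sets P1" using sP1 sQ1 by simp
      show "G \<in> sets P1" using GB sP1 by simp
      show "emeasure P1 (space P1 - G) = 0" using P1G spP1 by simp
      show "measure P1 (space P1) = measure Q1 (space Q1)"
        using P1Q1 spP1 spQ1 by (simp add: measure_def)
    qed
    finally show ?thesis using spP1 by simp
  qed
  define NeX where "NeX = {z::('x \<times> 'y) \<times> ('x \<times> 'y). fst (fst z) \<noteq> fst (snd z)}"
  define NX where "NX = {z::'x \<times> 'x. fst z \<noteq> snd z}"
  have NXB: "NX \<in> sets borel" unfolding NX_def by (rule sets_Ne)
  have NeXB: "NeX \<in> sets borel" unfolding NeX_def
    by (intro borel_open open_Collect_neq continuous_intros)
  have "emeasure \<Delta> NeX = 0"
    unfolding \<Delta>_def using NeXB sm by (simp add: emeasure_distr_cont continuous_intros NeX_def)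
  then have m\<Delta>NeX: "measure \<Delta> NeX = 0" by (simp add: measure_def)
  have "emeasure \<rho> NeX = emeasure \<kappa> NX"
  proof -
    have c: "continuous_on UNIV (\<lambda>z::('x \<times> 'y) \<times> ('x \<times> 'y). (fst (fst z), fst (snd z)))"
      by (intro continuous_intros)
    have "emeasure \<kappa> NX = emeasure \<rho> ((\<lambda>z. (fst (fst z), fst (snd z))) -` NX)"
      unfolding \<rho>X[symmetric] by (rule emeasure_distr_cont[OF s\<rho> c NXB])
    also have "(\<lambda>z. (fst (fst z), fst (snd z))) -` NX = NeX" by (auto simp: NX_def NeX_def)
    finally show ?thesis by simp
  qed
  then have m\<rho>NeX: "measure \<rho> NeX = measure \<kappa> NX" by (simp add: measure_def)
  have m\<pi>NeX: "measure \<pi> NeX = measure \<kappa> NX"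
    unfolding \<pi>_def using measure_msum[OF f\<Delta> f\<rho> _, of NeX] s\<rho> s\<Delta> NeXB m\<Delta>NeX m\<rho>NeX by simp
  have tvX: "tv_dist (distr P borel fst) (distr Q borel fst) = tv_dist PX1 QX1"
  proof -
    have mfst: "fst \<in> measurable m (borel :: 'x measure)" using sm by (intro borel_meas_cont continuous_intros)
    have "distr P borel fst = msum (distr m borel fst) PX1"
      unfolding eqP PX1_def using sP1 sm mfst by (subst distr_msum) auto
    moreover have "distr Q borel fst = msum (distr m borel fst) QX1"
      unfolding eqQ QX1_def using sQ1 sm mfst by (subst distr_msum) auto
    moreover have "finite_measure (distr m borel (fst :: 'x \<times> 'y \<Rightarrow> 'x))"
      using fm sm by (intro finite_distr_cont continuous_intros)
    ultimately show ?thesis using fPX1 fQX1 sPX1 sQX1 by (simp add: tv_dist_msum)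
  qed
  show ?thesis
    using prob s\<pi> \<pi>1 \<pi>2 m\<pi>Ne tvPQ m\<pi>NeX \<kappa>Ne tvX unfolding Ne_def NeX_def NX_def by auto
qed

end
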